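(* Let $X_1,X_2,\dots$ be i.i.d. real-valued random variables with common distribution $F$, let $f_c:\mathbb{R}^2\to\mathbb{R}$ be Borel measurable with $f_c(x,y)=f_c(y,x)$, let $B\subset\mathbb{R}$ be a Borel set, and fix a real number $w$. For each $n$, consider the random graph on vertices $1,\dots,n$ in which $i\neq j$ are adjacent iff $f_c(X_i,X_j)\in B$. For vertex $i$, let $D_n(i)$ be its degree and $T_n(i)$ the number of triangles containing $i$, and define the local clustering coefficient $$C_n(i)=\frac{T_n(i)}{\binom{D_n(i)}{2}}I_{\{D_n(i)\ge 2\}}+w\,I_{\{D_n(i)\in\{0,1\}\}},$$ and the global clustering coefficient $C_n=\frac1n\sum_{i=1}^n C_n(i)$. Let $h_D(x,y)=I_B(f_c(x,y))$, $h_T(x,y,z)=I_B(f_c(x,y))I_B(f_c(y,z))I_B(f_c(z,x))$, $E_D(x)=\int h_D(x,y)F(dy)$, $E_T(x)=\iint h_T(x,y,z)F(dy)F(dz)$, and $$C(1)=\frac{E_T(X_1)}{E_D(X_1)^2}I_{\{E_D(X_1)>0\}}+w\,I_{\{E_D(X_1)=0\}}.$$ Then $C_n\to\mathbb{E}[C(1)]$ almost surely as $n\to\infty$.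
   Context: $I_A$ denotes the indicator function of the set $A$. *)

theory Defs
  imports "HOL-Probability.Probability"
begin

text \<open>Random geometric-type graph on vertices 1..n: i ~ j iff i \<noteq> j and fc (x i) (x j) \<in> B.
  Here x is the realisation of the sample (x i = X i \<omega>).\<close>

definition adj :: "(real \<Rightarrow> real \<Rightarrow> real) \<Rightarrow> real set \<Rightarrow> (nat \<Rightarrow> real) \<Rightarrow> nat \<Rightarrow> nat \<Rightarrow> bool" where
  "adj fc B x i j \<longleftrightarrow> i \<noteq> j \<and> fc (x i) (x j) \<in> B"

definition degree_n :: "(real \<Rightarrow> real \<Rightarrow> real) \<Rightarrow> real set \<Rightarrow> (nat \<Rightarrow> real) \<Rightarrow> nat \<Rightarrow> nat \<Rightarrow> nat" where
  "degree_n fc B x n i = card {j \<in> {1..n}. adj fc B x i j}"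

definition triangles_n :: "(real \<Rightarrow> real \<Rightarrow> real) \<Rightarrow> real set \<Rightarrow> (nat \<Rightarrow> real) \<Rightarrow> nat \<Rightarrow> nat \<Rightarrow> nat" where
  "triangles_n fc B x n i = card {(j, k). j \<in> {1..n} \<and> k \<in> {1..n} \<and> j < k \<and>
      adj fc B x i j \<and> adj fc B x i k \<and> adj fc B x j k}"

definition local_clust :: "(real \<Rightarrow> real \<Rightarrow> real) \<Rightarrow> real set \<Rightarrow> real \<Rightarrow> (nat \<Rightarrow> real) \<Rightarrow> nat \<Rightarrow> nat \<Rightarrow> real" where
  "local_clust fc B w x n i =
     real (triangles_n fc B x n i) / real (degree_n fc B x n i choose 2)
       * indicator {2..} (degree_n fc B x n i)
     + w * indicator {0, 1} (degree_n fc B x n i)"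

definition global_clust :: "(real \<Rightarrow> real \<Rightarrow> real) \<Rightarrow> real set \<Rightarrow> real \<Rightarrow> (nat \<Rightarrow> real) \<Rightarrow> nat \<Rightarrow> real" where
  "global_clust fc B w x n = (1 / real n) * (\<Sum>i = 1..n. local_clust fc B w x n i)"

definition h_D :: "(real \<Rightarrow> real \<Rightarrow> real) \<Rightarrow> real set \<Rightarrow> real \<Rightarrow> real \<Rightarrow> real" where
  "h_D fc B x y = indicator B (fc x y)"

definition h_T :: "(real \<Rightarrow> real \<Rightarrow> real) \<Rightarrow> real set \<Rightarrow> real \<Rightarrow> real \<Rightarrow> real \<Rightarrow> real" where
  "h_T fc B x y z = indicator B (fc x y) * indicator B (fc y z) * indicator B (fc z x)"

definition E_D :: "real measure \<Rightarrow> (real \<Rightarrow> real \<Rightarrow> real) \<Rightarrow> real set \<Rightarrow> real \<Rightarrow> real" where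
  "E_D F fc B x = (\<integral>y. h_D fc B x y \<partial>F)"

definition E_T :: "real measure \<Rightarrow> (real \<Rightarrow> real \<Rightarrow> real) \<Rightarrow> real set \<Rightarrow> real \<Rightarrow> real" where
  "E_T F fc B x = (\<integral>y. (\<integral>z. h_T fc B x y z \<partial>F) \<partial>F)"

definition C_lim :: "real measure \<Rightarrow> (real \<Rightarrow> real \<Rightarrow> real) \<Rightarrow> real set \<Rightarrow> real \<Rightarrow> real \<Rightarrow> real" where
  "C_lim F fc B w x =
     E_T F fc B x / (E_D F fc B x)\<^sup>2 * indicator {0<..} (E_D F fc B x)
     + w * indicator {0} (E_D F fc B x)"

end

theory Submission
  imports Defs "HOL-Probability.Probability"
begin


lemma card_lt_pairs2:
  fixes N :: "nat set"
  assumes "finite N" and sym: "\<And>j k. P j k = P k j"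
  shows "2 * card {(j,k). j\<in>N \<and> k\<in>N \<and> j<k \<and> P j k} = card {(j,k). j\<in>N \<and> k\<in>N \<and> j\<noteq>k \<and> P j k}"
proof -
  define S where "S = {(j,k). j\<in>N \<and> k\<in>N \<and> j<k \<and> P j k}"
  define S' where "S' = {(j,k). j\<in>N \<and> k\<in>N \<and> k<j \<and> P j k}"
  have fin: "finite (N \<times> N)" using assms by auto
  have fS: "finite S" by (rule finite_subset[OF _ fin]) (auto simp: S_def)
  have fS': "finite S'" by (rule finite_subset[OF _ fin]) (auto simp: S'_def)
  have img: "S' = (\<lambda>(j,k). (k,j)) ` S"
    unfolding S_def S'_def using sym by (auto simp: image_iff)
  have inj: "inj_on (\<lambda>(j,k). (k,j)) S" by (auto simp: inj_on_def)
  have cS': "card S' = card S" using img card_image[OF inj] by simp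
  have un: "{(j,k). j\<in>N \<and> k\<in>N \<and> j\<noteq>k \<and> P j k} = S \<union> S'"
    unfolding S_def S'_def by auto
  have dis: "S \<inter> S' = {}" unfolding S_def S'_def by auto
  show ?thesis unfolding un using card_Un_disjoint[OF fS fS' dis] cS' by (simp add: S_def)
qed

lemma card_offdiag:
  fixes N :: "nat set"
  assumes "finite N"
  shows "card {(j,k). j\<in>N \<and> k\<in>N \<and> j\<noteq>k} = card N * card N - card N"
proof -
  have e: "{(j,k). j\<in>N \<and> k\<in>N \<and> j\<noteq>k} = N \<times> N - (\<lambda>j. (j,j)) ` N" by auto
  have "card ((\<lambda>j. (j,j)) ` N) = card N" by (rule card_image) (auto simp: inj_on_def)
  moreover have "card (N \<times> N - (\<lambda>j. (j,j)) ` N) = card (N \<times> N) - card ((\<lambda>j. (j,j)) ` N)"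
    by (rule card_Diff_subset) (use assms in auto)
  ultimately show ?thesis unfolding e by (simp add: card_cartesian_product)
qed

lemma card_lt_pairs_choose:
  fixes N :: "nat set"
  assumes "finite N"
  shows "card {(j,k). j\<in>N \<and> k\<in>N \<and> j<k} = card N choose 2"
proof -
  have "2 * card {(j,k). j\<in>N \<and> k\<in>N \<and> j<k \<and> True} = card {(j,k). j\<in>N \<and> k\<in>N \<and> j\<noteq>k \<and> True}"
    by (rule card_lt_pairs2[OF assms]) auto
  then have "2 * card {(j,k). j\<in>N \<and> k\<in>N \<and> j<k} = card N * card N - card N"
    using card_offdiag[OF assms] by simp
  moreover have "card N * card N - card N = card N * (card N - 1)"
    by (simp add: diff_mult_distrib2)
  ultimately show ?thesis by (simp add: choose_two)
qed

definition hh :: "(real \<Rightarrow> real \<Rightarrow> real) \<Rightarrow> real set \<Rightarrow> real \<Rightarrow> real \<Rightarrow> real" where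
  "hh fc B x y = indicator B (fc x y)"

definition hT3 :: "(real \<Rightarrow> real \<Rightarrow> real) \<Rightarrow> real set \<Rightarrow> real \<Rightarrow> real \<Rightarrow> real \<Rightarrow> real" where
  "hT3 fc B x y z = hh fc B x y * hh fc B x z * hh fc B y z"

lemma sum_count:
  fixes A :: "'a set"
  assumes "finite A"
  shows "real (card {j\<in>A. P j}) = (\<Sum>j\<in>A. if P j then 1 else 0)"
proof -
  have "real (card {j\<in>A. P j}) = (\<Sum>j\<in>{j\<in>A. P j}. 1)" by simp
  also have "\<dots> = (\<Sum>j\<in>A. if P j then 1 else 0)" using assms by (rule sum.inter_filter)
  finally show ?thesis .
qed

lemma degree_sum:
  assumes "i \<in> {1..n}"
  shows "real (degree_n fc B x n i) = (\<Sum>j\<in>{1..n}-{i}. hh fc B (x i) (x j))"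
proof -
  have "{j \<in> {1..n}. adj fc B x i j} = {j \<in> {1..n}-{i}. fc (x i) (x j) \<in> B}"
    by (auto simp: adj_def)
  moreover have "real (card {j \<in> {1..n}-{i}. fc (x i) (x j) \<in> B}) = (\<Sum>j\<in>{1..n}-{i}. if fc (x i) (x j) \<in> B then 1 else 0)"
    by (rule sum_count) simp
  ultimately have "real (degree_n fc B x n i) = (\<Sum>j\<in>{1..n}-{i}. if fc (x i) (x j) \<in> B then 1 else 0)"
    unfolding degree_n_def by metis
  also have "\<dots> = (\<Sum>j\<in>{1..n}-{i}. hh fc B (x i) (x j))"
    by (intro sum.cong refl) (simp add: hh_def indicator_def)
  finally show ?thesis .
qed

lemma triangles_sum:
  assumes "i \<in> {1..n}" and sym: "\<And>a b. fc a b = fc b a"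
  shows "2 * real (triangles_n fc B x n i) =
     (\<Sum>j\<in>{1..n}-{i}. \<Sum>k\<in>{1..n}-{i}-{j}. hT3 fc B (x i) (x j) (x k))"
proof -
  define N where "N = {1..n} - {i}"
  define P where "P j k \<longleftrightarrow> fc (x i) (x j) \<in> B \<and> fc (x i) (x k) \<in> B \<and> fc (x j) (x k) \<in> B" for j k
  have Psym: "P j k = P k j" for j k unfolding P_def using sym by auto
  have fN: "finite N" by (simp add: N_def)
  have e1: "{(j, k). j \<in> {1..n} \<and> k \<in> {1..n} \<and> j < k \<and>
      adj fc B x i j \<and> adj fc B x i k \<and> adj fc B x j k} = {(j,k). j\<in>N \<and> k\<in>N \<and> j<k \<and> P j k}"
    by (auto simp: adj_def N_def P_def)
  have "2 * triangles_n fc B x n i = card {(j,k). j\<in>N \<and> k\<in>N \<and> j\<noteq>k \<and> P j k}"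
    unfolding triangles_n_def e1 by (rule card_lt_pairs2[OF fN Psym])
  also have "{(j,k). j\<in>N \<and> k\<in>N \<and> j\<noteq>k \<and> P j k} = {p \<in> SIGMA j:N. N - {j}. P (fst p) (snd p)}"
    by auto
  finally have "2 * real (triangles_n fc B x n i) = real (card {p \<in> SIGMA j:N. N - {j}. P (fst p) (snd p)})"
    by (metis of_nat_mult of_nat_numeral)
  also have "\<dots> = (\<Sum>p\<in>(SIGMA j:N. N - {j}). if P (fst p) (snd p) then 1 else 0)"
    by (rule sum_count) (use fN in auto)
  also have "\<dots> = (\<Sum>j\<in>N. \<Sum>k\<in>N-{j}. if P j k then 1 else 0)"
    by (subst sum.Sigma) (use fN in \<open>auto simp: case_prod_beta\<close>)
  also have "\<dots> = (\<Sum>j\<in>N. \<Sum>k\<in>N-{j}. hT3 fc B (x i) (x j) (x k))"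
    by (intro sum.cong refl) (auto simp: P_def hT3_def hh_def indicator_def)
  finally show ?thesis by (simp add: N_def)
qed

lemma triangles_le_choose:
  "triangles_n fc B x n i \<le> degree_n fc B x n i choose 2"
proof -
  define N where "N = {j \<in> {1..n}. adj fc B x i j}"
  have fN: "finite N" by (simp add: N_def)
  have "triangles_n fc B x n i \<le> card {(j,k). j\<in>N \<and> k\<in>N \<and> j<k}"
    unfolding triangles_n_def
    by (rule card_mono) (use fN in \<open>auto simp: N_def intro: finite_subset[of _ "N \<times> N"]\<close>)
  also have "\<dots> = card N choose 2" by (rule card_lt_pairs_choose[OF fN])
  finally show ?thesis by (simp add: N_def degree_n_def)
qed

lemma fin_pairs: "finite {(j,k). j \<in> {a..(b::nat)} \<and> k \<in> {a..b} \<and> Q j k}"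
  by (rule finite_subset[of _ "{a..b} \<times> {a..b}"]) auto

lemma degree_mono: "n \<le> n' \<Longrightarrow> degree_n fc B x n i \<le> degree_n fc B x n' i"
  unfolding degree_n_def by (rule card_mono) auto

lemma triangles_mono: "n \<le> n' \<Longrightarrow> triangles_n fc B x n i \<le> triangles_n fc B x n' i"
  unfolding triangles_n_def by (rule card_mono) (use fin_pairs[of 1 n'] in \<open>auto elim!: finite_subset\<close>)

lemma degree_le: "i \<in> {1..n} \<Longrightarrow> degree_n fc B x n i \<le> n - 1"
proof -
  assume i: "i \<in> {1..n}"
  have "degree_n fc B x n i \<le> card ({1..n} - {i})"
    unfolding degree_n_def by (rule card_mono) (auto simp: adj_def)
  also have "\<dots> = n - 1" using i by simp
  finally show ?thesis .
qed

lemma real_choose2: "2 * real (m choose 2) = real m * (real m - 1)"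
proof (cases m)
  case 0 then show ?thesis by simp
next
  case (Suc k)
  have "even (m * (m - 1))" by auto
  then have "real (m * (m - 1) div 2) * 2 = real (m * (m - 1))"
    by (metis dvd_mult_div_cancel mult.commute of_nat_mult of_nat_numeral)
  then show ?thesis using Suc by (simp add: choose_two of_nat_diff algebra_simps)
qed

lemma local_clust_ge2:
  assumes "degree_n fc B x n i \<ge> 2"
  shows "local_clust fc B w x n i = 2 * real (triangles_n fc B x n i) /
      (real (degree_n fc B x n i) * (real (degree_n fc B x n i) - 1))"
proof -
  have eq: "real (degree_n fc B x n i choose 2) = real (degree_n fc B x n i) * (real (degree_n fc B x n i) - 1) / 2"
    using real_choose2[of "degree_n fc B x n i"] by simp
  show ?thesis using assms unfolding local_clust_def by (simp add: indicator_def eq)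
qed

lemma local_clust_bound:
  "local_clust fc B w x n i \<in> {0..1} \<or> local_clust fc B w x n i = w"
proof (cases "degree_n fc B x n i \<ge> 2")
  case True
  have pos: "real (degree_n fc B x n i choose 2) > 0" using True by simp
  have "real (triangles_n fc B x n i) \<le> real (degree_n fc B x n i choose 2)"
    using triangles_le_choose by (simp only: of_nat_le_iff)
  then have "real (triangles_n fc B x n i) / real (degree_n fc B x n i choose 2) \<in> {0..1}"
    using pos by (simp add: divide_le_eq_1)
  then show ?thesis using True unfolding local_clust_def by (simp add: indicator_def)
next
  case False
  then have "degree_n fc B x n i \<in> {0,1}" by auto
  then show ?thesis using False unfolding local_clust_def by (simp add: indicator_def)
qed

lemma local_clust_deg0:
  "degree_n fc B x n i = 0 \<Longrightarrow> local_clust fc B w x n i = w"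
  unfolding local_clust_def by (simp add: indicator_def)


locale clust = prob_space M
  for M :: "'a measure" +
  fixes X :: "nat \<Rightarrow> 'a \<Rightarrow> real" and F :: "real measure"
    and fc :: "real \<Rightarrow> real \<Rightarrow> real" and B :: "real set"
  assumes X_meas[measurable]: "\<And>i. X i \<in> borel_measurable M"
    and indep: "indep_vars (\<lambda>_. borel) X UNIV"
    and distrX: "\<And>i. distr M borel (X i) = F"
    and fc_meas: "(\<lambda>(x, y). fc x y) \<in> borel_measurable (borel \<Otimes>\<^sub>M borel)"
    and fc_sym: "\<And>x y. fc x y = fc y x"
    and B_sets: "B \<in> sets borel"
begin

lemma F_prob: "prob_space F"
  using prob_space_distr[OF X_meas[of 0]] distrX[of 0] by simp

lemma sets_F[simp, measurable_cong]: "sets F = sets borel"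
  using distrX[of 0] by (metis sets_distr)

lemma space_F[simp]: "space F = UNIV"
  using distrX[of 0] by (metis space_distr space_borel)

lemma hh_meas[measurable]: "(\<lambda>(x, y). hh fc B x y) \<in> borel_measurable (borel \<Otimes>\<^sub>M borel)"
proof -
  have "(\<lambda>(x, y). hh fc B x y) = indicator B \<circ> (\<lambda>(x, y). fc x y)"
    by (auto simp: hh_def fun_eq_iff)
  then show ?thesis
    using measurable_comp[OF fc_meas borel_measurable_indicator[OF B_sets]] by simp
qed

lemma hh_01: "hh fc B x y \<in> {0, 1}"
  by (simp add: hh_def indicator_def)

lemma hh_ge0[simp]: "0 \<le> hh fc B x y" and hh_le1[simp]: "hh fc B x y \<le> 1"
  by (auto simp: hh_def indicator_def)

lemma hh_sym: "hh fc B x y = hh fc B y x"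
  by (simp add: hh_def fc_sym)

lemma hT3_meas[measurable]: "(\<lambda>(x, y, z). hT3 fc B x y z) \<in> borel_measurable (borel \<Otimes>\<^sub>M borel \<Otimes>\<^sub>M borel)"
  unfolding hT3_def by measurable

lemma hT3_ge0[simp]: "0 \<le> hT3 fc B x y z" and hT3_le1[simp]: "hT3 fc B x y z \<le> 1"
  by (auto simp: hT3_def intro!: mult_le_one)

lemma h_T_eq: "h_T fc B x y z = hT3 fc B x y z"
  by (simp add: h_T_def hT3_def hh_def fc_sym[of z x] mult_ac)

lemma h_D_eq: "h_D fc B x y = hh fc B x y"
  by (simp add: h_D_def hh_def)

lemma X_rv: "random_variable borel (X i)" by simp

lemma indep2:
  assumes "i \<noteq> j"
  shows "indep_var borel (X i) borel (X j)"
proof -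
  have "indep_var borel ((\<lambda>f. f i) \<circ> (\<lambda>\<omega>. restrict (\<lambda>i. X i \<omega>) {i}))
     borel ((\<lambda>f. f j) \<circ> (\<lambda>\<omega>. restrict (\<lambda>i. X i \<omega>) {j}))"
    using assms by (intro indep_var_compose[OF indep_var_restrict[OF indep]]) auto
  also have "(\<lambda>f. f i) \<circ> (\<lambda>\<omega>. restrict (\<lambda>i. X i \<omega>) {i}) = X i" by auto
  also have "(\<lambda>f. f j) \<circ> (\<lambda>\<omega>. restrict (\<lambda>i. X i \<omega>) {j}) = X j" by auto
  finally show ?thesis .
qed

lemma pair_distr:
  assumes "i \<noteq> j"
  shows "distr M (borel \<Otimes>\<^sub>M borel) (\<lambda>\<omega>. (X i \<omega>, X j \<omega>)) = F \<Otimes>\<^sub>M F"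
  using indep_var_distribution_eq[THEN iffD1, OF indep2[OF assms]] distrX by simp

lemma indep_pairs:
  assumes "{j, k} \<inter> {j', k'} = {}"
  shows "indep_var (borel \<Otimes>\<^sub>M borel) (\<lambda>\<omega>. (X j \<omega>, X k \<omega>)) (borel \<Otimes>\<^sub>M borel) (\<lambda>\<omega>. (X j' \<omega>, X k' \<omega>))"
proof -
  have "indep_var (borel \<Otimes>\<^sub>M borel) ((\<lambda>f. (f j, f k)) \<circ> (\<lambda>\<omega>. restrict (\<lambda>i. X i \<omega>) {j, k}))
     (borel \<Otimes>\<^sub>M borel) ((\<lambda>f. (f j', f k')) \<circ> (\<lambda>\<omega>. restrict (\<lambda>i. X i \<omega>) {j', k'}))"
    using assms by (intro indep_var_compose[OF indep_var_restrict[OF indep]]) auto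
  also have "(\<lambda>f. (f j, f k)) \<circ> (\<lambda>\<omega>. restrict (\<lambda>i. X i \<omega>) {j, k}) = (\<lambda>\<omega>. (X j \<omega>, X k \<omega>))" by auto
  also have "(\<lambda>f. (f j', f k')) \<circ> (\<lambda>\<omega>. restrict (\<lambda>i. X i \<omega>) {j', k'}) = (\<lambda>\<omega>. (X j' \<omega>, X k' \<omega>))" by auto
  finally show ?thesis .
qed

lemma cond_fubini:
  fixes G :: "real \<Rightarrow> (nat \<Rightarrow> real) \<Rightarrow> real" and K :: real
  assumes iA: "i \<notin> A"
    and G[measurable]: "(\<lambda>(x, u). G x u) \<in> borel_measurable (borel \<Otimes>\<^sub>M PiM A (\<lambda>_. borel))"
    and bnd: "\<And>x u. \<bar>G x u\<bar> \<le> K"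
  shows "expectation (\<lambda>\<omega>. G (X i \<omega>) (restrict (\<lambda>k. X k \<omega>) A)) =
         (\<integral>x. expectation (\<lambda>\<omega>. G x (restrict (\<lambda>k. X k \<omega>) A)) \<partial>F)"
proof -
  define U where "U \<omega> = restrict (\<lambda>k. X k \<omega>) A" for \<omega>
  define V where "V \<omega> = restrict (\<lambda>k. X k \<omega>) {i}" for \<omega>
  have U[measurable]: "U \<in> measurable M (PiM A (\<lambda>_. borel))"
    unfolding U_def by measurable
  have V[measurable]: "V \<in> measurable M (PiM {i} (\<lambda>_. borel))"
    unfolding V_def by measurable
  define MU where "MU = distr M (PiM A (\<lambda>_. borel)) U"
  define MV where "MV = distr M (PiM {i} (\<lambda>_. borel)) V"
  interpret F: prob_space F by (rule F_prob)
  interpret PF: product_prob_space "\<lambda>_. F" ..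
  interpret MU: prob_space MU unfolding MU_def by (rule prob_space_distr) simp
  interpret MV: prob_space MV unfolding MV_def by (rule prob_space_distr) simp
  interpret FU: pair_prob_space MV MU ..
  have ind: "indep_var (PiM {i} (\<lambda>_. borel)) V (PiM A (\<lambda>_. borel)) U"
    unfolding U_def V_def using iA by (intro indep_var_restrict[OF indep]) auto
  have jd: "distr M (PiM {i} (\<lambda>_. borel) \<Otimes>\<^sub>M PiM A (\<lambda>_. borel)) (\<lambda>\<omega>. (V \<omega>, U \<omega>)) = MV \<Otimes>\<^sub>M MU"
    using indep_var_distribution_eq[THEN iffD1, OF ind] by (simp add: MU_def MV_def)
  have MV_eq: "MV = PiM {i} (\<lambda>_. F)"
  proof -
    have "indep_vars (\<lambda>_. borel) X {i}" by (rule indep_vars_subset[OF indep]) auto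
    then have "distr M (PiM {i} (\<lambda>_. borel)) (\<lambda>x. \<lambda>i\<in>{i}. X i x) = PiM {i} (\<lambda>i. distr M borel (X i))"
      by (subst indep_vars_iff_distr_eq_PiM[symmetric]) auto
    moreover have "V = (\<lambda>x. \<lambda>i\<in>{i}. X i x)" by (simp add: V_def[abs_def])
    ultimately show ?thesis by (simp add: MV_def distrX)
  qed
  define G' where "G' v u = G (v i) u" for v u
  have G'm[measurable]: "(\<lambda>(v, u). G' v u) \<in> borel_measurable (PiM {i} (\<lambda>_. borel) \<Otimes>\<^sub>M PiM A (\<lambda>_. borel))"
    unfolding G'_def by measurable
  have sFU: "sets (MV \<Otimes>\<^sub>M MU) = sets (PiM {i} (\<lambda>_. borel) \<Otimes>\<^sub>M PiM A (\<lambda>_. borel))"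
    by (intro sets_pair_measure_cong) (simp_all add: MU_def MV_def)
  have Gm: "(\<lambda>(v, u). G' v u) \<in> borel_measurable (MV \<Otimes>\<^sub>M MU)"
    using G'm by (simp add: measurable_cong_sets[OF sFU refl])
  have intG: "integrable (MV \<Otimes>\<^sub>M MU) (\<lambda>(v, u). G' v u)"
    by (rule FU.integrable_const_bound[where B=K]) (use bnd Gm in \<open>auto simp: G'_def\<close>)
  have "expectation (\<lambda>\<omega>. G (X i \<omega>) (U \<omega>)) = expectation (\<lambda>\<omega>. (\<lambda>(v, u). G' v u) (V \<omega>, U \<omega>))"
    by (simp add: G'_def V_def)
  also have "\<dots> = (\<integral>p. (\<lambda>(v, u). G' v u) p \<partial>distr M (PiM {i} (\<lambda>_. borel) \<Otimes>\<^sub>M PiM A (\<lambda>_. borel)) (\<lambda>\<omega>. (V \<omega>, U \<omega>)))"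
    by (subst integral_distr) auto
  also have "\<dots> = (\<integral>p. (\<lambda>(v, u). G' v u) p \<partial>(MV \<Otimes>\<^sub>M MU))" by (simp add: jd)
  also have "\<dots> = (\<integral>v. (\<integral>u. G' v u \<partial>MU) \<partial>MV)"
    using FU.integral_fst[OF intG] by simp
  also have "\<dots> = (\<integral>v. (\<lambda>x. \<integral>u. G x u \<partial>MU) (v i) \<partial>PiM {i} (\<lambda>_. F))"
    by (simp add: MV_eq G'_def)
  also have "\<dots> = (\<integral>x. (\<integral>u. G x u \<partial>MU) \<partial>F)"
  proof (rule PF.product_integral_singleton)
    have "(\<lambda>x. \<integral>u. G x u \<partial>MU) \<in> borel_measurable borel"
    proof (rule MU.borel_measurable_lebesgue_integral)
      show "(\<lambda>(x, u). G x u) \<in> borel_measurable (borel \<Otimes>\<^sub>M MU)"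
        using G by (simp add: measurable_cong_sets[OF sets_pair_measure_cong[OF refl, of MU "PiM A (\<lambda>_. borel)" borel] refl] MU_def)
    qed
    then show "(\<lambda>x. \<integral>u. G x u \<partial>MU) \<in> borel_measurable F" by simp
  qed
  also have "\<dots> = (\<integral>x. expectation (\<lambda>\<omega>. G x (U \<omega>)) \<partial>F)"
  proof -
    have "(\<integral>u. G x u \<partial>MU) = expectation (\<lambda>\<omega>. G x (U \<omega>))" for x
    proof -
      have "(\<lambda>u. G x u) \<in> borel_measurable (PiM A (\<lambda>_. borel))" by measurable
      then show ?thesis unfolding MU_def by (subst integral_distr) auto
    qed
    then show ?thesis by simp
  qed
  finally show ?thesis by (simp add: U_def)
qed

end


lemma (in prob_space) sq_sum_bound:
  fixes b :: "'i \<Rightarrow> 'a \<Rightarrow> real"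
  assumes fin: "finite P"
    and meas[measurable]: "\<And>p. p \<in> P \<Longrightarrow> b p \<in> borel_measurable M"
    and bnd: "\<And>p \<omega>. p \<in> P \<Longrightarrow> \<bar>b p \<omega>\<bar> \<le> 1"
    and zero: "\<And>p q. p \<in> P \<Longrightarrow> q \<in> P \<Longrightarrow> \<not> R p q \<Longrightarrow> expectation (\<lambda>\<omega>. b p \<omega> * b q \<omega>) = 0"
  shows "expectation (\<lambda>\<omega>. (\<Sum>p\<in>P. b p \<omega>)\<^sup>2) \<le> (\<Sum>p\<in>P. real (card {q\<in>P. R p q}))"
proof -
  have intpq: "integrable M (\<lambda>\<omega>. b p \<omega> * b q \<omega>)" if "p \<in> P" "q \<in> P" for p q
  proof (rule integrable_const_bound[where B=1])
    show "AE x in M. norm (b p x * b q x) \<le> 1"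
      using bnd[OF that(1)] bnd[OF that(2)] by (auto simp: abs_mult intro!: mult_le_one)
  qed (use that in simp)
  have le: "expectation (\<lambda>\<omega>. b p \<omega> * b q \<omega>) \<le> (if R p q then 1 else 0)" if "p \<in> P" "q \<in> P" for p q
  proof (cases "R p q")
    case True
    have "expectation (\<lambda>\<omega>. b p \<omega> * b q \<omega>) \<le> expectation (\<lambda>\<omega>. 1)"
    proof (rule integral_mono[OF intpq[OF that]])
      fix \<omega> show "b p \<omega> * b q \<omega> \<le> 1"
        using bnd[OF that(1), of \<omega>] bnd[OF that(2), of \<omega>]
        by (metis abs_ge_self abs_mult dual_order.trans mult_le_one abs_ge_zero)
    qed simp
    then show ?thesis using True by (simp add: prob_space)
  qed (use zero that in simp)
  have "(\<lambda>\<omega>. (\<Sum>p\<in>P. b p \<omega>)\<^sup>2) = (\<lambda>\<omega>. \<Sum>p\<in>P. \<Sum>q\<in>P. b p \<omega> * b q \<omega>)"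
    by (simp add: power2_eq_square sum_product)
  then have "expectation (\<lambda>\<omega>. (\<Sum>p\<in>P. b p \<omega>)\<^sup>2) = (\<Sum>p\<in>P. \<Sum>q\<in>P. expectation (\<lambda>\<omega>. b p \<omega> * b q \<omega>))"
    using intpq by (simp add: integral_sum)
  also have "\<dots> \<le> (\<Sum>p\<in>P. \<Sum>q\<in>P. (if R p q then 1 else 0))"
    by (intro sum_mono le)
  also have "\<dots> = (\<Sum>p\<in>P. real (card {q\<in>P. R p q}))"
    using fin by (simp add: sum_count)
  finally show ?thesis .
qed

context clust
begin

definition EDh :: "real \<Rightarrow> real" where "EDh x = (\<integral>y. hh fc B x y \<partial>F)"
definition ETh :: "real \<Rightarrow> real" where "ETh x = (\<integral>y. (\<integral>z. hT3 fc B x y z \<partial>F) \<partial>F)"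

lemma hh_meas2[measurable]: "(\<lambda>y. hh fc B x y) \<in> borel_measurable borel"
  by measurable

lemma hh_int: "integrable F (\<lambda>y. hh fc B x y)"
proof -
  interpret F: prob_space F by (rule F_prob)
  show ?thesis by (rule F.integrable_const_bound[where B=1]) auto
qed

lemma E_hh: "expectation (\<lambda>\<omega>. hh fc B x (X j \<omega>)) = EDh x"
  unfolding EDh_def by (subst distrX[of j, symmetric], subst integral_distr) auto

lemma int_hh: "integrable M (\<lambda>\<omega>. hh fc B x (X p \<omega>))"
  by (rule integrable_const_bound[where B=1]) auto

lemma E_hh_c: "expectation (\<lambda>\<omega>. hh fc B x (X p \<omega>) - c) = EDh x - c"
  using E_hh[of x p] by (subst Bochner_Integration.integral_diff[OF int_hh]) (auto simp: prob_space)

lemma var_D: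
  fixes A :: "nat set"
  assumes "finite A"
  shows "expectation (\<lambda>\<omega>. (\<Sum>j\<in>A. hh fc B x (X j \<omega>) - EDh x)\<^sup>2) \<le> card A"
proof -
  have EDh01: "0 \<le> EDh x \<and> EDh x \<le> 1"
  proof -
    interpret F: prob_space F by (rule F_prob)
    have "EDh x \<le> F.expectation (\<lambda>y. 1)" unfolding EDh_def by (intro integral_mono hh_int) auto
    moreover have "0 \<le> EDh x" unfolding EDh_def by (intro integral_nonneg_AE) auto
    ultimately show ?thesis using F.prob_space by simp
  qed
  have pb: "\<bar>hh fc B x y - EDh x\<bar> \<le> 1" for y
    using EDh01 hh_ge0[of x y] hh_le1[of x y] by linarith
  have int: "integrable M (\<lambda>\<omega>. hh fc B x (X j \<omega>) - EDh x)" for j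
    by (rule integrable_const_bound[where B=1]) (use pb in auto)
  have "expectation (\<lambda>\<omega>. (\<Sum>j\<in>A. hh fc B x (X j \<omega>) - EDh x)\<^sup>2) \<le> (\<Sum>p\<in>A. real (card {q\<in>A. p = q}))"
  proof (rule sq_sum_bound[OF assms])
    fix p :: nat and \<omega> show "\<bar>hh fc B x (X p \<omega>) - EDh x\<bar> \<le> 1" using EDh01 hh_ge0[of x "X p \<omega>"] hh_le1[of x "X p \<omega>"] by linarith
  next
    fix p q :: nat assume "p \<noteq> q"
    have ind: "indep_var borel ((\<lambda>y. hh fc B x y - EDh x) \<circ> X p) borel ((\<lambda>y. hh fc B x y - EDh x) \<circ> X q)"
      by (rule indep_var_compose[OF indep2[OF \<open>p \<noteq> q\<close>]]) auto
    have "expectation (\<lambda>\<omega>. (hh fc B x (X p \<omega>) - EDh x) * (hh fc B x (X q \<omega>) - EDh x)) =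
          expectation (\<lambda>\<omega>. hh fc B x (X p \<omega>) - EDh x) * expectation (\<lambda>\<omega>. hh fc B x (X q \<omega>) - EDh x)"
      using indep_var_lebesgue_integral[OF ind] int by (simp add: comp_def)
    also have "expectation (\<lambda>\<omega>. hh fc B x (X p \<omega>) - EDh x) = 0"
      using E_hh_c by simp
    finally show "expectation (\<lambda>\<omega>. (hh fc B x (X p \<omega>) - EDh x) * (hh fc B x (X q \<omega>) - EDh x)) = 0" by simp
  qed simp
  also have "\<dots> = card A"
  proof -
    have "{q\<in>A. p = q} = {p}" if "p \<in> A" for p using that by auto
    then show ?thesis by simp
  qed
  finally show ?thesis .
qed

lemma ETh01: "0 \<le> ETh x \<and> ETh x \<le> 1"
proof -
  interpret F: prob_space F by (rule F_prob)
  have i1: "integrable F (\<lambda>z. hT3 fc B x y z)" for y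
    by (rule F.integrable_const_bound[where B=1]) auto
  have in1: "0 \<le> (\<integral>z. hT3 fc B x y z \<partial>F) \<and> (\<integral>z. hT3 fc B x y z \<partial>F) \<le> 1" for y
  proof
    show "0 \<le> (\<integral>z. hT3 fc B x y z \<partial>F)" by (intro integral_nonneg_AE) auto
    have "(\<integral>z. hT3 fc B x y z \<partial>F) \<le> (\<integral>z. 1 \<partial>F)" by (intro integral_mono i1) auto
    then show "(\<integral>z. hT3 fc B x y z \<partial>F) \<le> 1" using F.prob_space by simp
  qed
  have i2: "integrable F (\<lambda>y. \<integral>z. hT3 fc B x y z \<partial>F)"
    by (rule F.integrable_const_bound[where B=1]) (use in1 in auto)
  show ?thesis
  proof
    show "0 \<le> ETh x" unfolding ETh_def by (intro integral_nonneg_AE) (use in1 in auto)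
    have "ETh x \<le> (\<integral>z. 1 \<partial>F)" unfolding ETh_def by (intro integral_mono i2) (use in1 in auto)
    then show "ETh x \<le> 1" using F.prob_space by simp
  qed
qed

lemma int_hT: "integrable M (\<lambda>\<omega>. hT3 fc B x (X j \<omega>) (X k \<omega>))"
  by (rule integrable_const_bound[where B=1]) auto

lemma E_hT:
  assumes "j \<noteq> k"
  shows "expectation (\<lambda>\<omega>. hT3 fc B x (X j \<omega>) (X k \<omega>)) = ETh x"
proof -
  interpret F: prob_space F by (rule F_prob)
  interpret FF: pair_prob_space F F ..
  have m: "(\<lambda>(y, z). hT3 fc B x y z) \<in> borel_measurable (borel \<Otimes>\<^sub>M borel)" by measurable
  have sFF: "sets (F \<Otimes>\<^sub>M F) = sets (borel \<Otimes>\<^sub>M borel)"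
    by (intro sets_pair_measure_cong) simp_all
  have mF: "(\<lambda>(y, z). hT3 fc B x y z) \<in> borel_measurable (F \<Otimes>\<^sub>M F)"
    using m by (simp add: measurable_cong_sets[OF sFF refl])
  have intF: "integrable (F \<Otimes>\<^sub>M F) (\<lambda>(y, z). hT3 fc B x y z)"
    by (rule FF.integrable_const_bound[where B=1]) (use mF in auto)
  have "expectation (\<lambda>\<omega>. hT3 fc B x (X j \<omega>) (X k \<omega>)) =
      (\<integral>p. (\<lambda>(y, z). hT3 fc B x y z) p \<partial>distr M (borel \<Otimes>\<^sub>M borel) (\<lambda>\<omega>. (X j \<omega>, X k \<omega>)))"
    by (subst integral_distr) (auto simp: m)
  also have "\<dots> = (\<integral>p. (\<lambda>(y, z). hT3 fc B x y z) p \<partial>(F \<Otimes>\<^sub>M F))"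
    by (simp add: pair_distr[OF assms])
  also have "\<dots> = ETh x"
    unfolding ETh_def using FF.integral_fst[OF intF] by simp
  finally show ?thesis .
qed

lemma E_hT_c: "j \<noteq> k \<Longrightarrow> expectation (\<lambda>\<omega>. hT3 fc B x (X j \<omega>) (X k \<omega>) - c) = ETh x - c"
  using E_hT[of j k x] by (subst Bochner_Integration.integral_diff[OF int_hT]) (auto simp: prob_space)

lemma card_nondisj:
  fixes A :: "nat set"
  assumes "finite A"
  shows "card {q \<in> (SIGMA j:A. A - {j}). {fst p, snd p} \<inter> {fst q, snd q} \<noteq> {}} \<le> 4 * card A"
proof -
  let ?S = "{fst p, snd p}"
  have sub: "{q \<in> (SIGMA j:A. A - {j}). ?S \<inter> {fst q, snd q} \<noteq> {}} \<subseteq> (?S \<times> A) \<union> (A \<times> ?S)"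
    by auto
  have cS: "card ?S \<le> 2" by (rule card_insert_le_m1) auto
  have "card {q \<in> (SIGMA j:A. A - {j}). ?S \<inter> {fst q, snd q} \<noteq> {}} \<le> card ((?S \<times> A) \<union> (A \<times> ?S))"
    by (rule card_mono[OF _ sub]) (use assms in auto)
  also have "\<dots> \<le> card (?S \<times> A) + card (A \<times> ?S)" by (rule card_Un_le)
  also have "\<dots> = 2 * (card ?S * card A)" by (simp add: card_cartesian_product)
  also have "\<dots> \<le> 2 * (2 * card A)" using cS by simp
  finally show ?thesis by simp
qed

lemma var_T:
  fixes A :: "nat set"
  assumes fA: "finite A"
  shows "expectation (\<lambda>\<omega>. (\<Sum>p\<in>(SIGMA j:A. A - {j}). hT3 fc B x (X (fst p) \<omega>) (X (snd p) \<omega>) - ETh x)\<^sup>2)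
     \<le> 4 * real (card A) ^ 3"
proof -
  let ?P = "SIGMA j:A. A - {j}"
  have fP: "finite ?P" using fA by auto
  have pb: "\<bar>hT3 fc B x y z - ETh x\<bar> \<le> 1" for y z
    using ETh01[of x] hT3_ge0[of x y z] hT3_le1[of x y z] by linarith
  have int: "integrable M (\<lambda>\<omega>. hT3 fc B x (X j \<omega>) (X k \<omega>) - ETh x)" for j k
    by (rule integrable_const_bound[where B=1]) (use pb in auto)
  have "expectation (\<lambda>\<omega>. (\<Sum>p\<in>?P. hT3 fc B x (X (fst p) \<omega>) (X (snd p) \<omega>) - ETh x)\<^sup>2)
     \<le> (\<Sum>p\<in>?P. real (card {q\<in>?P. {fst p, snd p} \<inter> {fst q, snd q} \<noteq> {}}))"
  proof (rule sq_sum_bound[OF fP])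
    fix p :: "nat \<times> nat" and \<omega> show "\<bar>hT3 fc B x (X (fst p) \<omega>) (X (snd p) \<omega>) - ETh x\<bar> \<le> 1" by (rule pb)
  next
    fix p q :: "nat \<times> nat" assume p: "p \<in> ?P" and q: "q \<in> ?P" and d: "\<not> {fst p, snd p} \<inter> {fst q, snd q} \<noteq> {}"
    define g where "g = (\<lambda>(y, z). hT3 fc B x y z - ETh x)"
    have gm: "g \<in> borel_measurable (borel \<Otimes>\<^sub>M borel)" unfolding g_def by measurable
    have ind: "indep_var borel (g \<circ> (\<lambda>\<omega>. (X (fst p) \<omega>, X (snd p) \<omega>))) borel (g \<circ> (\<lambda>\<omega>. (X (fst q) \<omega>, X (snd q) \<omega>)))"
      by (rule indep_var_compose[OF indep_pairs gm gm]) (use d in auto)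
    have "expectation (\<lambda>\<omega>. (hT3 fc B x (X (fst p) \<omega>) (X (snd p) \<omega>) - ETh x) * (hT3 fc B x (X (fst q) \<omega>) (X (snd q) \<omega>) - ETh x)) =
          expectation (\<lambda>\<omega>. hT3 fc B x (X (fst p) \<omega>) (X (snd p) \<omega>) - ETh x) * expectation (\<lambda>\<omega>. hT3 fc B x (X (fst q) \<omega>) (X (snd q) \<omega>) - ETh x)"
      using indep_var_lebesgue_integral[OF ind] int by (simp add: comp_def g_def)
    also have "expectation (\<lambda>\<omega>. hT3 fc B x (X (fst p) \<omega>) (X (snd p) \<omega>) - ETh x) = 0"
    proof -
      have "fst p \<noteq> snd p" using p by auto
      from E_hT_c[OF this, of x "ETh x"] show ?thesis by simp
    qed
    finally show "expectation (\<lambda>\<omega>. (hT3 fc B x (X (fst p) \<omega>) (X (snd p) \<omega>) - ETh x) * (hT3 fc B x (X (fst q) \<omega>) (X (snd q) \<omega>) - ETh x)) = 0" by simp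
  qed simp
  also have "\<dots> \<le> (\<Sum>p\<in>?P. real (4 * card A))"
    by (intro sum_mono) (use card_nondisj[OF fA] in \<open>simp only: of_nat_le_iff\<close>)
  also have "\<dots> = real (card ?P) * (4 * real (card A))" by simp
  also have "\<dots> \<le> real (card A * card A) * (4 * real (card A))"
  proof -
    have "card ?P \<le> card (A \<times> A)" by (rule card_mono) (use fA in auto)
    then have "real (card ?P) \<le> real (card A * card A)" by (simp add: card_cartesian_product del: of_nat_mult)
    then show ?thesis by (intro mult_right_mono) auto
  qed
  also have "\<dots> = 4 * real (card A) ^ 3" by (simp add: power3_eq_cube)
  finally show ?thesis .
qed

end


lemma (in prob_space) integral_le_const_any:
  fixes f :: "'a \<Rightarrow> real"
  assumes "\<And>x. x \<in> space M \<Longrightarrow> f x \<le> c" "0 \<le> c"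
  shows "expectation f \<le> c"
proof (cases "integrable M f")
  case True
  have "expectation f \<le> expectation (\<lambda>_. c)" by (rule integral_mono[OF True]) (use assms in auto)
  then show ?thesis by (simp add: prob_space)
next
  case False
  then show ?thesis using assms by (simp add: not_integrable_integral_eq)
qed

context clust
begin

lemma EDh_meas[measurable]: "EDh \<in> borel_measurable borel"
proof -
  interpret F: prob_space F by (rule F_prob)
  have s: "sets (borel \<Otimes>\<^sub>M F) = sets (borel \<Otimes>\<^sub>M borel)" by (intro sets_pair_measure_cong) simp_all
  have "(\<lambda>(x, y). hh fc B x y) \<in> borel_measurable (borel \<Otimes>\<^sub>M F)"
    by (simp add: measurable_cong_sets[OF s refl])
  then have "(\<lambda>x. \<integral>y. hh fc B x y \<partial>F) \<in> borel_measurable borel"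
    by (rule F.borel_measurable_lebesgue_integral)
  then show ?thesis by (simp add: EDh_def[abs_def])
qed

lemma ETh_meas[measurable]: "ETh \<in> borel_measurable borel"
proof -
  interpret F: prob_space F by (rule F_prob)
  have s: "sets ((borel \<Otimes>\<^sub>M borel) \<Otimes>\<^sub>M F) = sets ((borel \<Otimes>\<^sub>M borel) \<Otimes>\<^sub>M borel)"
    by (intro sets_pair_measure_cong) simp_all
  have "(\<lambda>(xy, z). hT3 fc B (fst xy) (snd xy) z) \<in> borel_measurable ((borel \<Otimes>\<^sub>M borel) \<Otimes>\<^sub>M borel)"
    unfolding hT3_def by measurable
  then have "(\<lambda>(xy, z). hT3 fc B (fst xy) (snd xy) z) \<in> borel_measurable ((borel \<Otimes>\<^sub>M borel) \<Otimes>\<^sub>M F)"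
    by (simp add: measurable_cong_sets[OF s refl])
  then have m1: "(\<lambda>xy. \<integral>z. hT3 fc B (fst xy) (snd xy) z \<partial>F) \<in> borel_measurable (borel \<Otimes>\<^sub>M borel)"
    by (rule F.borel_measurable_lebesgue_integral)
  have s2: "sets (borel \<Otimes>\<^sub>M F) = sets (borel \<Otimes>\<^sub>M borel)" by (intro sets_pair_measure_cong) simp_all
  have "(\<lambda>(x, y). \<integral>z. hT3 fc B x y z \<partial>F) \<in> borel_measurable (borel \<Otimes>\<^sub>M F)"
    using m1 by (simp add: measurable_cong_sets[OF s2 refl] case_prod_beta')
  then have "(\<lambda>x. \<integral>y. (\<integral>z. hT3 fc B x y z \<partial>F) \<partial>F) \<in> borel_measurable borel"
    by (rule F.borel_measurable_lebesgue_integral)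
  then show ?thesis by (simp add: ETh_def[abs_def])
qed

lemma EDh01: "0 \<le> EDh x \<and> EDh x \<le> 1"
proof -
  interpret F: prob_space F by (rule F_prob)
  have "EDh x \<le> F.expectation (\<lambda>y. 1)" unfolding EDh_def by (intro integral_mono hh_int) auto
  moreover have "0 \<le> EDh x" unfolding EDh_def by (intro integral_nonneg_AE) auto
  ultimately show ?thesis using F.prob_space by simp
qed

lemma ESD:
  fixes A :: "nat set"
  assumes fA: "finite A" and iA: "i \<notin> A"
  shows "expectation (\<lambda>\<omega>. (\<Sum>j\<in>A. hh fc B (X i \<omega>) (X j \<omega>) - EDh (X i \<omega>))\<^sup>2) \<le> card A"
proof -
  define G where "G x u = (\<Sum>j\<in>A. hh fc B x (u j) - EDh x)\<^sup>2" for x and u :: "nat \<Rightarrow> real"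
  have Gm: "(\<lambda>(x, u). G x u) \<in> borel_measurable (borel \<Otimes>\<^sub>M PiM A (\<lambda>_. borel))"
    unfolding G_def by measurable
  have pb: "\<bar>hh fc B x y - EDh x\<bar> \<le> 1" for x y
    using EDh01[of x] hh_ge0[of x y] hh_le1[of x y] by linarith
  have Gb: "\<bar>G x u\<bar> \<le> real (card A)^2" for x u
  proof -
    have "\<bar>\<Sum>j\<in>A. hh fc B x (u j) - EDh x\<bar> \<le> (\<Sum>j\<in>A. \<bar>hh fc B x (u j) - EDh x\<bar>)" by (rule sum_abs)
    also have "\<dots> \<le> (\<Sum>j\<in>A. 1)" by (intro sum_mono pb)
    finally have "\<bar>\<Sum>j\<in>A. hh fc B x (u j) - EDh x\<bar> \<le> real (card A)" by simp
    then show ?thesis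
    proof -
      assume h: "\<bar>\<Sum>j\<in>A. hh fc B x (u j) - EDh x\<bar> \<le> real (card A)"
      have "\<bar>\<Sum>j\<in>A. hh fc B x (u j) - EDh x\<bar>^2 \<le> real (card A)^2" by (rule power_mono[OF h]) simp
      then show ?thesis unfolding G_def by simp
    qed
  qed
  have "expectation (\<lambda>\<omega>. (\<Sum>j\<in>A. hh fc B (X i \<omega>) (X j \<omega>) - EDh (X i \<omega>))\<^sup>2) =
        expectation (\<lambda>\<omega>. G (X i \<omega>) (restrict (\<lambda>k. X k \<omega>) A))"
    unfolding G_def by (intro arg_cong[where f="expectation"] ext arg_cong[where f="\<lambda>x. x\<^sup>2"] sum.cong refl) auto
  also have "\<dots> = (\<integral>x. expectation (\<lambda>\<omega>. G x (restrict (\<lambda>k. X k \<omega>) A)) \<partial>F)"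
    by (rule cond_fubini[OF iA Gm Gb])
  also have "\<dots> \<le> card A"
  proof (rule prob_space.integral_le_const_any[OF F_prob])
    fix x
    have "expectation (\<lambda>\<omega>. G x (restrict (\<lambda>k. X k \<omega>) A)) = expectation (\<lambda>\<omega>. (\<Sum>j\<in>A. hh fc B x (X j \<omega>) - EDh x)\<^sup>2)"
      unfolding G_def by (intro arg_cong[where f="expectation"] ext arg_cong[where f="\<lambda>x. x\<^sup>2"] sum.cong refl) auto
    also have "\<dots> \<le> card A" by (rule var_D[OF fA])
    finally show "expectation (\<lambda>\<omega>. G x (restrict (\<lambda>k. X k \<omega>) A)) \<le> card A" .
  qed simp
  finally show ?thesis .
qed

lemma EST:
  fixes A :: "nat set"
  assumes fA: "finite A" and iA: "i \<notin> A"
  shows "expectation (\<lambda>\<omega>. (\<Sum>p\<in>(SIGMA j:A. A - {j}). hT3 fc B (X i \<omega>) (X (fst p) \<omega>) (X (snd p) \<omega>) - ETh (X i \<omega>))\<^sup>2)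
     \<le> 4 * real (card A) ^ 3"
proof -
  let ?P = "SIGMA j:A. A - {j}"
  have fP: "finite ?P" using fA by auto
  define G where "G x u = (\<Sum>p\<in>?P. hT3 fc B x (u (fst p)) (u (snd p)) - ETh x)\<^sup>2" for x and u :: "nat \<Rightarrow> real"
  have Gm: "(\<lambda>(x, u). G x u) \<in> borel_measurable (borel \<Otimes>\<^sub>M PiM A (\<lambda>_. borel))"
  proof -
    have gm: "(\<lambda>z. hT3 fc B (fst z) (snd z (fst p)) (snd z (snd p)) - ETh (fst z)) \<in> borel_measurable (borel \<Otimes>\<^sub>M PiM A (\<lambda>_. borel))"
      if "p \<in> ?P" for p
    proof -
      have a: "fst p \<in> A" and b: "snd p \<in> A" using that by auto
      show ?thesis unfolding hT3_def using a b by measurable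
    qed
    have "(\<lambda>z. (\<Sum>p\<in>?P. hT3 fc B (fst z) (snd z (fst p)) (snd z (snd p)) - ETh (fst z))\<^sup>2) \<in> borel_measurable (borel \<Otimes>\<^sub>M PiM A (\<lambda>_. borel))"
      by (intro borel_measurable_power borel_measurable_sum gm)
    then show ?thesis by (simp add: G_def case_prod_beta)
  qed
  have pb: "\<bar>hT3 fc B x y z - ETh x\<bar> \<le> 1" for x y z
    using ETh01[of x] hT3_ge0[of x y z] hT3_le1[of x y z] by linarith
  have Gb: "\<bar>G x u\<bar> \<le> real (card ?P)^2" for x u
  proof -
    have "\<bar>\<Sum>p\<in>?P. hT3 fc B x (u (fst p)) (u (snd p)) - ETh x\<bar> \<le> (\<Sum>p\<in>?P. \<bar>hT3 fc B x (u (fst p)) (u (snd p)) - ETh x\<bar>)" by (rule sum_abs)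
    also have "\<dots> \<le> (\<Sum>p\<in>?P. 1)" by (intro sum_mono pb)
    finally have "\<bar>\<Sum>p\<in>?P. hT3 fc B x (u (fst p)) (u (snd p)) - ETh x\<bar> \<le> real (card ?P)" by simp
    then show ?thesis
    proof -
      assume h: "\<bar>\<Sum>p\<in>?P. hT3 fc B x (u (fst p)) (u (snd p)) - ETh x\<bar> \<le> real (card ?P)"
      have "\<bar>\<Sum>p\<in>?P. hT3 fc B x (u (fst p)) (u (snd p)) - ETh x\<bar>^2 \<le> real (card ?P)^2" by (rule power_mono[OF h]) simp
      then show ?thesis unfolding G_def by simp
    qed
  qed
  have "expectation (\<lambda>\<omega>. (\<Sum>p\<in>?P. hT3 fc B (X i \<omega>) (X (fst p) \<omega>) (X (snd p) \<omega>) - ETh (X i \<omega>))\<^sup>2) =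
        expectation (\<lambda>\<omega>. G (X i \<omega>) (restrict (\<lambda>k. X k \<omega>) A))"
    unfolding G_def by (intro arg_cong[where f="expectation"] ext arg_cong[where f="\<lambda>x. x\<^sup>2"] sum.cong refl) auto
  also have "\<dots> = (\<integral>x. expectation (\<lambda>\<omega>. G x (restrict (\<lambda>k. X k \<omega>) A)) \<partial>F)"
    by (rule cond_fubini[OF iA Gm Gb])
  also have "\<dots> \<le> 4 * real (card A) ^ 3"
  proof (rule prob_space.integral_le_const_any[OF F_prob])
    fix x
    have "expectation (\<lambda>\<omega>. G x (restrict (\<lambda>k. X k \<omega>) A)) = expectation (\<lambda>\<omega>. (\<Sum>p\<in>?P. hT3 fc B x (X (fst p) \<omega>) (X (snd p) \<omega>) - ETh x)\<^sup>2)"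
      unfolding G_def by (intro arg_cong[where f="expectation"] ext arg_cong[where f="\<lambda>x. x\<^sup>2"] sum.cong refl) auto
    also have "\<dots> \<le> 4 * real (card A) ^ 3" by (rule var_T[OF fA])
    finally show "expectation (\<lambda>\<omega>. G x (restrict (\<lambda>k. X k \<omega>) A)) \<le> 4 * real (card A) ^ 3" .
  qed simp
  finally show ?thesis .
qed

end


lemma sq_le_of_abs: "\<bar>a\<bar> \<le> (b::real) \<Longrightarrow> a\<^sup>2 \<le> b\<^sup>2"
  using power_mono[of "\<bar>a\<bar>" b 2] by simp

context clust
begin

definition SDs :: "nat \<Rightarrow> nat \<Rightarrow> 'a \<Rightarrow> real" where
  "SDs n i \<omega> = (\<Sum>j\<in>{1..n}-{i}. hh fc B (X i \<omega>) (X j \<omega>) - EDh (X i \<omega>))"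

definition STs :: "nat \<Rightarrow> nat \<Rightarrow> 'a \<Rightarrow> real" where
  "STs n i \<omega> = (\<Sum>p\<in>(SIGMA j:{1..n}-{i}. {1..n}-{i}-{j}). hT3 fc B (X i \<omega>) (X (fst p) \<omega>) (X (snd p) \<omega>) - ETh (X i \<omega>))"

definition badS :: "real \<Rightarrow> nat \<Rightarrow> nat \<Rightarrow> 'a \<Rightarrow> bool" where
  "badS \<delta> n i \<omega> \<longleftrightarrow> \<bar>SDs n i \<omega>\<bar> \<ge> \<delta> * n \<or> \<bar>STs n i \<omega>\<bar> \<ge> \<delta> * real n ^ 2"

lemma SDs_meas[measurable]: "SDs n i \<in> borel_measurable M"
  unfolding SDs_def[abs_def] by measurable

lemma STs_meas[measurable]: "STs n i \<in> borel_measurable M"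
proof -
  have "(\<lambda>\<omega>. hT3 fc B (X i \<omega>) (X (fst p) \<omega>) (X (snd p) \<omega>) - ETh (X i \<omega>)) \<in> borel_measurable M" for p
    unfolding hT3_def by measurable
  then show ?thesis unfolding STs_def[abs_def] by (intro borel_measurable_sum)
qed

lemma badS_sets[measurable]: "{\<omega> \<in> space M. badS \<delta> n i \<omega>} \<in> sets M"
  unfolding badS_def by measurable

lemma prob_badS:
  assumes i: "i \<in> {1..n}" and d: "\<delta> > 0"
  shows "prob {\<omega> \<in> space M. badS \<delta> n i \<omega>} \<le> 5 / (\<delta>\<^sup>2 * n)"
proof -
  define A where "A = {1..n} - {i}"
  have fA: "finite A" and iA: "i \<notin> A" by (auto simp: A_def)
  have cA: "card A = n - 1" using i by (simp add: A_def)
  have n1: "n \<ge> 1" using i by auto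
  have npos: "real n > 0" using n1 by simp
  define c1 where "c1 = (\<delta> * n)\<^sup>2"
  define c2 where "c2 = (\<delta> * real n ^ 2)\<^sup>2"
  have c1p: "c1 > 0" and c2p: "c2 > 0" using d npos by (auto simp: c1_def c2_def)
  define Q where "Q \<omega> = (SDs n i \<omega>)\<^sup>2 / c1 + (STs n i \<omega>)\<^sup>2 / c2" for \<omega>
  have pbD: "\<bar>hh fc B x y - EDh x\<bar> \<le> 1" for x y
    using EDh01[of x] hh_ge0[of x y] hh_le1[of x y] by linarith
  have pbT: "\<bar>hT3 fc B x y z - ETh x\<bar> \<le> 1" for x y z
    using ETh01[of x] hT3_ge0[of x y z] hT3_le1[of x y z] by linarith
  have bD: "\<bar>SDs n i \<omega>\<bar> \<le> real (card A)" for \<omega>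
  proof -
    have "\<bar>SDs n i \<omega>\<bar> \<le> (\<Sum>j\<in>A. \<bar>hh fc B (X i \<omega>) (X j \<omega>) - EDh (X i \<omega>)\<bar>)"
      unfolding SDs_def A_def by (rule sum_abs)
    also have "\<dots> \<le> (\<Sum>j\<in>A. 1)" by (intro sum_mono pbD)
    finally show ?thesis by simp
  qed
  let ?P = "SIGMA j:A. A - {j}"
  have bT: "\<bar>STs n i \<omega>\<bar> \<le> real (card ?P)" for \<omega>
  proof -
    have "\<bar>STs n i \<omega>\<bar> \<le> (\<Sum>p\<in>?P. \<bar>hT3 fc B (X i \<omega>) (X (fst p) \<omega>) (X (snd p) \<omega>) - ETh (X i \<omega>)\<bar>)"
      unfolding STs_def A_def by (rule sum_abs)
    also have "\<dots> \<le> (\<Sum>p\<in>?P. 1)" by (intro sum_mono pbT)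
    finally show ?thesis by simp
  qed
  have intD: "integrable M (\<lambda>\<omega>. (SDs n i \<omega>)\<^sup>2)"
  proof (rule integrable_const_bound[where B="real (card A)^2"])
    show "AE x in M. norm ((SDs n i x)\<^sup>2) \<le> real (card A)^2"
      using bD by (auto intro!: sq_le_of_abs)
  qed simp
  have intT: "integrable M (\<lambda>\<omega>. (STs n i \<omega>)\<^sup>2)"
  proof (rule integrable_const_bound[where B="real (card ?P)^2"])
    show "AE x in M. norm ((STs n i x)\<^sup>2) \<le> real (card ?P)^2"
      using bT by (auto intro!: sq_le_of_abs)
  qed simp
  have intQ: "integrable M Q" unfolding Q_def using intD intT by auto
  have ED: "expectation (\<lambda>\<omega>. (SDs n i \<omega>)\<^sup>2) \<le> real n"
  proof -
    have "expectation (\<lambda>\<omega>. (SDs n i \<omega>)\<^sup>2) \<le> card A"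
      using ESD[OF fA iA] unfolding SDs_def A_def .
    then show ?thesis using cA by simp
  qed
  have ET: "expectation (\<lambda>\<omega>. (STs n i \<omega>)\<^sup>2) \<le> 4 * real n ^ 3"
  proof -
    have "expectation (\<lambda>\<omega>. (STs n i \<omega>)\<^sup>2) \<le> 4 * real (card A) ^ 3"
      using EST[OF fA iA] unfolding STs_def A_def by (simp add: Diff_insert2[symmetric] insert_commute)
    also have "\<dots> \<le> 4 * real n ^ 3" using cA by (simp add: power_mono)
    finally show ?thesis .
  qed
  have ind_le: "indicator {\<omega> \<in> space M. badS \<delta> n i \<omega>} \<omega> \<le> Q \<omega>" for \<omega>
  proof (cases "\<omega> \<in> space M \<and> badS \<delta> n i \<omega>")
    case True
    then have "\<bar>SDs n i \<omega>\<bar> \<ge> \<delta> * n \<or> \<bar>STs n i \<omega>\<bar> \<ge> \<delta> * real n ^ 2" by (simp add: badS_def)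
    then have "1 \<le> Q \<omega>"
    proof
      assume h: "\<bar>SDs n i \<omega>\<bar> \<ge> \<delta> * n"
      have "c1 \<le> (SDs n i \<omega>)\<^sup>2" unfolding c1_def using power_mono[OF h, of 2] d npos by simp
      then have "1 \<le> (SDs n i \<omega>)\<^sup>2 / c1" using c1p by simp
      moreover have "0 \<le> (STs n i \<omega>)\<^sup>2 / c2" using c2p by simp
      ultimately show ?thesis unfolding Q_def by linarith
    next
      assume h: "\<bar>STs n i \<omega>\<bar> \<ge> \<delta> * real n ^ 2"
      have "c2 \<le> (STs n i \<omega>)\<^sup>2" unfolding c2_def using power_mono[OF h, of 2] d npos by simp
      then have "1 \<le> (STs n i \<omega>)\<^sup>2 / c2" using c2p by simp
      moreover have "0 \<le> (SDs n i \<omega>)\<^sup>2 / c1" using c1p by simp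
      ultimately show ?thesis unfolding Q_def by linarith
    qed
    then show ?thesis using True by simp
  next
    case False
    then show ?thesis using c1p c2p by (auto simp: Q_def indicator_def)
  qed
  have "prob {\<omega> \<in> space M. badS \<delta> n i \<omega>} = expectation (indicator {\<omega> \<in> space M. badS \<delta> n i \<omega>})"
    by (simp add: Int_absorb2)
  also have "\<dots> \<le> expectation Q"
    by (rule integral_mono[OF _ intQ ind_le]) (rule integrable_real_indicator; simp add: emeasure_eq_measure)
  also have "expectation Q = expectation (\<lambda>\<omega>. (SDs n i \<omega>)\<^sup>2) / c1 + expectation (\<lambda>\<omega>. (STs n i \<omega>)\<^sup>2) / c2"
    unfolding Q_def using intD intT by simp
  also have "\<dots> \<le> real n / c1 + 4 * real n ^ 3 / c2"
    using ED ET c1p c2p by (intro add_mono divide_right_mono) auto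
  also have "real n / c1 + 4 * real n ^ 3 / c2 = 5 / (\<delta>\<^sup>2 * n)"
    unfolding c1_def c2_def using npos d by (simp add: field_simps power2_eq_square power3_eq_cube)
  finally show ?thesis .
qed

end


context clust
begin

definition cnt :: "real \<Rightarrow> nat \<Rightarrow> 'a \<Rightarrow> real" where
  "cnt \<delta> n \<omega> = real (card {i\<in>{1..n}. badS \<delta> n i \<omega>})"

lemma cnt_sum: "cnt \<delta> n \<omega> = (\<Sum>i\<in>{1..n}. indicator {\<omega> \<in> space M. badS \<delta> n i \<omega>} \<omega>)" if "\<omega> \<in> space M"
proof -
  have "cnt \<delta> n \<omega> = (\<Sum>i\<in>{1..n}. if badS \<delta> n i \<omega> then 1 else 0)"
    unfolding cnt_def by (rule sum_count) simp
  also have "\<dots> = (\<Sum>i\<in>{1..n}. indicator {\<omega> \<in> space M. badS \<delta> n i \<omega>} \<omega>)"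
    using that by (intro sum.cong) (auto simp: indicator_def)
  finally show ?thesis .
qed

lemma cnt_meas[measurable]: "cnt \<delta> n \<in> borel_measurable M"
proof -
  have "(indicator {\<omega> \<in> space M. badS \<delta> n i \<omega>} :: 'a \<Rightarrow> real) \<in> borel_measurable M" for i
    by (rule borel_measurable_indicator[OF badS_sets])
  then have "(\<lambda>\<omega>. \<Sum>i\<in>{1..n}. indicator {\<omega> \<in> space M. badS \<delta> n i \<omega>} \<omega> :: real) \<in> borel_measurable M"
    by (rule borel_measurable_sum)
  then show ?thesis by (rule measurable_cong[THEN iffD1, rotated]) (simp add: cnt_sum)
qed

lemma E_cnt:
  assumes n: "n \<ge> 1" and d: "\<delta> > 0"
  shows "expectation (cnt \<delta> n) \<le> 5 / \<delta>\<^sup>2"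
proof -
  have int: "integrable M (indicator {\<omega> \<in> space M. badS \<delta> n i \<omega>} :: 'a \<Rightarrow> real)" for i
    by (rule integrable_real_indicator) (simp_all add: emeasure_eq_measure)
  have "expectation (cnt \<delta> n) = expectation (\<lambda>\<omega>. \<Sum>i\<in>{1..n}. indicator {\<omega> \<in> space M. badS \<delta> n i \<omega>} \<omega>)"
    by (rule Bochner_Integration.integral_cong) (simp_all add: cnt_sum)
  also have "\<dots> = (\<Sum>i\<in>{1..n}. prob {\<omega> \<in> space M. badS \<delta> n i \<omega>})"
    using int by (simp add: Int_absorb2)
  also have "\<dots> \<le> (\<Sum>i\<in>{1..n}. 5 / (\<delta>\<^sup>2 * n))"
    by (intro sum_mono prob_badS d) auto
  also have "\<dots> = 5 / \<delta>\<^sup>2" using n by simp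
  finally show ?thesis .
qed

lemma prob_cnt:
  fixes \<delta> \<eta> :: real
  assumes n: "n \<ge> 1" and d: "\<delta> > 0" and e: "\<eta> > 0"
  shows "prob {\<omega> \<in> space M. cnt \<delta> n \<omega> \<ge> \<eta> * n} \<le> 5 / (\<delta>\<^sup>2 * \<eta> * n)"
proof -
  have b: "\<bar>cnt \<delta> n \<omega>\<bar> \<le> real n" for \<omega>
  proof -
    have "card {i\<in>{1..n}. badS \<delta> n i \<omega>} \<le> card {1..n}" by (rule card_mono) auto
    then show ?thesis by (simp add: cnt_def)
  qed
  have int: "integrable M (cnt \<delta> n)"
    by (rule integrable_const_bound[where B="real n"]) (use b in auto)
  have "prob {\<omega> \<in> space M. cnt \<delta> n \<omega> \<ge> \<eta> * n} \<le> expectation (cnt \<delta> n) / (\<eta> * n)"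
    by (rule integral_Markov_inequality_measure[OF int]) (use n e in \<open>auto simp: cnt_def\<close>)
  also have "\<dots> \<le> (5 / \<delta>\<^sup>2) / (\<eta> * n)"
    using E_cnt[OF n d] n e by (intro divide_right_mono) auto
  finally show ?thesis by simp
qed

lemma AE_cnt1:
  fixes \<delta> \<eta> :: real
  assumes d: "\<delta> > 0" and e: "\<eta> > 0"
  shows "AE \<omega> in M. eventually (\<lambda>k. cnt \<delta> ((k+1)^2) \<omega> < \<eta> * real ((k+1)^2)) sequentially"
proof -
  define A where "A k = {\<omega> \<in> space M. cnt \<delta> ((k+1)^2) \<omega> \<ge> \<eta> * real ((k+1)^2)}" for k
  have As[measurable]: "A k \<in> sets M" for k unfolding A_def by measurable
  have pb: "prob (A k) \<le> (5 / (\<delta>\<^sup>2 * \<eta>)) * inverse (real (k+1) ^ 2)" for k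
  proof -
    have "prob (A k) \<le> 5 / (\<delta>\<^sup>2 * \<eta> * real ((k+1)^2))"
      unfolding A_def by (rule prob_cnt[OF _ d e]) simp
    then show ?thesis by (simp add: field_simps)
  qed
  have s0: "summable (\<lambda>k. inverse (real k ^ 2))"
    by (rule inverse_power_summable) simp
  have s1: "summable (\<lambda>k. inverse (real (k+1) ^ 2))"
    using summable_ignore_initial_segment[OF s0, of 1] by simp
  have "summable (\<lambda>k. prob (A k))"
  proof (rule summable_comparison_test'[OF summable_mult[OF s1, of "5 / (\<delta>\<^sup>2 * \<eta>)"]])
    fix k show "norm (prob (A k)) \<le> 5 / (\<delta>\<^sup>2 * \<eta>) * inverse (real (k + 1) ^ 2)"
      using pb[of k] by simp
  qed
  then have "AE \<omega> in M. eventually (\<lambda>k. \<omega> \<in> space M - A k) sequentially"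
    by (intro borel_cantelli_AE1) (auto simp: emeasure_eq_measure)
  then show ?thesis
    by (rule AE_mp) (auto simp: A_def elim!: eventually_mono intro!: AE_I2)
qed

lemma AE_cnt:
  "AE \<omega> in M. \<forall>r s. eventually (\<lambda>k. cnt (1 / real (Suc r)) ((k+1)^2) \<omega> < (1 / real (Suc s)) * real ((k+1)^2)) sequentially"
  by (simp only: AE_all_countable) (intro allI AE_cnt1; simp)

lemma AE_zero_deg:
  "AE \<omega> in M. \<forall>i j. i \<noteq> j \<longrightarrow> EDh (X i \<omega>) = 0 \<longrightarrow> hh fc B (X i \<omega>) (X j \<omega>) = 0"
proof -
  have "AE \<omega> in M. i \<noteq> j \<longrightarrow> EDh (X i \<omega>) = 0 \<longrightarrow> hh fc B (X i \<omega>) (X j \<omega>) = 0" for i j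
  proof (cases "i = j")
    case False
    interpret F: prob_space F by (rule F_prob)
    interpret FF: pair_prob_space F F ..
    define g where "g = (\<lambda>(x, y). indicator {x. EDh x = 0} x * hh fc B x y :: real)"
    have gm[measurable]: "g \<in> borel_measurable (borel \<Otimes>\<^sub>M borel)" unfolding g_def by measurable
    have sFF: "sets (F \<Otimes>\<^sub>M F) = sets (borel \<Otimes>\<^sub>M borel)"
      by (intro sets_pair_measure_cong) simp_all
    have gF: "g \<in> borel_measurable (F \<Otimes>\<^sub>M F)"
      using gm by (simp add: measurable_cong_sets[OF sFF refl])
    have gb: "\<bar>g p\<bar> \<le> 1" for p by (auto simp: g_def indicator_def split: prod.split)
    have intF: "integrable (F \<Otimes>\<^sub>M F) g"
      by (rule FF.integrable_const_bound[where B=1]) (use gF gb in auto)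
    have intM: "integrable M (\<lambda>\<omega>. g (X i \<omega>, X j \<omega>))"
      by (rule integrable_const_bound[where B=1]) (use gb in auto)
    have "expectation (\<lambda>\<omega>. g (X i \<omega>, X j \<omega>)) = (\<integral>p. g p \<partial>distr M (borel \<Otimes>\<^sub>M borel) (\<lambda>\<omega>. (X i \<omega>, X j \<omega>)))"
      by (subst integral_distr) auto
    also have "\<dots> = (\<integral>p. g p \<partial>(F \<Otimes>\<^sub>M F))" by (simp add: pair_distr[OF False])
    also have "\<dots> = (\<integral>x. (\<integral>y. g (x, y) \<partial>F) \<partial>F)"
      using FF.integral_fst'[OF intF] by simp
    also have "\<dots> = (\<integral>x. indicator {x. EDh x = 0} x * EDh x \<partial>F)"
      by (intro Bochner_Integration.integral_cong refl) (simp add: g_def EDh_def)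
    also have "\<dots> = 0" by (intro integral_eq_zero_AE) (auto simp: indicator_def)
    finally have "AE \<omega> in M. g (X i \<omega>, X j \<omega>) = 0"
      using integral_nonneg_eq_0_iff_AE[OF intM] by (simp add: g_def)
    then show ?thesis by (rule AE_mp) (auto simp: g_def indicator_def intro!: AE_I2)
  qed simp
  then show ?thesis by (simp only: AE_all_countable) auto
qed

end


lemma tendsto_from_rat:
  fixes s :: "nat \<Rightarrow> real"
  assumes "\<forall>r. eventually (\<lambda>n. \<bar>s n - l\<bar> < 1 / real (Suc r)) sequentially"
  shows "s \<longlonglongrightarrow> l"
proof (rule tendstoI)
  fix e :: real assume e: "e > 0"
  from ex_inverse_of_nat_less[OF e] obtain n :: nat where "0 < n" "inverse (real n) < e" by auto
  then have r: "1 / real (Suc (n - 1)) < e" by (simp add: inverse_eq_divide)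
  show "eventually (\<lambda>n. dist (s n) l < e) sequentially"
    using assms[rule_format, of "n - 1"] by eventually_elim (use r in \<open>auto simp: dist_real_def\<close>)
qed

context clust
begin

lemma slln:
  fixes \<phi> :: "real \<Rightarrow> real"
  assumes \<phi>m[measurable]: "\<phi> \<in> borel_measurable borel" and ab: "\<And>x. \<phi> x \<in> {a..b}" and "a < b"
  shows "AE \<omega> in M. (\<lambda>n. (\<Sum>i\<in>{1..n}. \<phi> (X i \<omega>)) / real n) \<longlonglongrightarrow> (\<integral>x. \<phi> x \<partial>F)"
proof -
  have mu: "expectation (\<lambda>\<omega>. \<phi> (X 1 \<omega>)) = (\<integral>x. \<phi> x \<partial>F)"
    by (subst distrX[of 1, symmetric], subst integral_distr) auto
  have hb: "prob {\<omega> \<in> space M. \<bar>(\<Sum>i\<in>{1..n}. \<phi> (X i \<omega>)) / real n - (\<integral>x. \<phi> x \<partial>F)\<bar> \<ge> \<epsilon>}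
      \<le> 2 * exp (-2 * real n * \<epsilon>\<^sup>2 / (b - a)\<^sup>2)" if n: "n \<ge> 1" and e: "\<epsilon> \<ge> 0" for n \<epsilon>
  proof -
    interpret H: Hoeffding_ineq_iid M "{1..n}" "\<lambda>i \<omega>. \<phi> (X i \<omega>)" "\<lambda>\<omega>. \<phi> (X 1 \<omega>)" a b
        "expectation (\<lambda>\<omega>. \<phi> (X 1 \<omega>))"
    proof unfold_locales
      show "indep_vars (\<lambda>_. borel) (\<lambda>i \<omega>. \<phi> (X i \<omega>)) {1..n}"
        by (rule indep_vars_compose2[OF indep_vars_subset[OF indep]]) auto
    next
      fix i
      have "distr M borel (\<lambda>\<omega>. \<phi> (X i \<omega>)) = distr F borel \<phi>"
        using distr_distr[OF \<phi>m X_meas[of i]] by (simp add: comp_def distrX)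
      moreover have "distr M borel (\<lambda>\<omega>. \<phi> (X 1 \<omega>)) = distr F borel \<phi>"
        using distr_distr[OF \<phi>m X_meas[of 1]] by (simp add: comp_def distrX)
      ultimately show "distr M borel (\<lambda>\<omega>. \<phi> (X i \<omega>)) = distr M borel (\<lambda>\<omega>. \<phi> (X 1 \<omega>))" by simp
    qed (use ab in auto)
    have ne: "{1..n} \<noteq> {}" using n by simp
    from H.Hoeffding_ineq_abs_ge'[OF e \<open>a < b\<close> ne] show ?thesis
      by (simp only: card_atLeastAtMost mu diff_Suc_1)
  qed
  have ev: "AE \<omega> in M. eventually (\<lambda>n. \<bar>(\<Sum>i\<in>{1..n}. \<phi> (X i \<omega>)) / real n - (\<integral>x. \<phi> x \<partial>F)\<bar> < 1 / real (Suc r)) sequentially" for r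
  proof -
    define \<epsilon> where "\<epsilon> = 1 / real (Suc r)"
    have e: "\<epsilon> > 0" by (simp add: \<epsilon>_def)
    define A where "A n = {\<omega> \<in> space M. \<bar>(\<Sum>i\<in>{1..Suc n}. \<phi> (X i \<omega>)) / real (Suc n) - (\<integral>x. \<phi> x \<partial>F)\<bar> \<ge> \<epsilon>}" for n
    have As[measurable]: "A n \<in> sets M" for n unfolding A_def by measurable
    define c where "c = exp (-2 * \<epsilon>\<^sup>2 / (b - a)\<^sup>2)"
    have c: "0 < c" "c < 1" using e \<open>a < b\<close> by (auto simp: c_def)
    have pb: "prob (A n) \<le> 2 * c ^ Suc n" for n
    proof -
      have "prob (A n) \<le> 2 * exp (-2 * real (Suc n) * \<epsilon>\<^sup>2 / (b - a)\<^sup>2)"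
        unfolding A_def by (rule hb) (use e in auto)
      also have "exp (-2 * real (Suc n) * \<epsilon>\<^sup>2 / (b - a)\<^sup>2) = c ^ Suc n"
      proof -
        have "-2 * real (Suc n) * \<epsilon>\<^sup>2 / (b - a)\<^sup>2 = real (Suc n) * (-2 * \<epsilon>\<^sup>2 / (b - a)\<^sup>2)"
          by (simp only: times_divide_eq_right mult_ac)
        then show ?thesis unfolding c_def by (simp only: exp_of_nat_mult)
      qed
      finally show ?thesis .
    qed
    have "summable (\<lambda>n. 2 * c ^ Suc n)" using c by (intro summable_mult summable_Suc_iff[THEN iffD2] summable_geometric) auto
    then have "summable (\<lambda>n. prob (A n))"
      by (rule summable_comparison_test') (use pb in auto)
    then have "AE \<omega> in M. eventually (\<lambda>n. \<omega> \<in> space M - A n) sequentially"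
      by (intro borel_cantelli_AE1) (auto simp: emeasure_eq_measure)
    then show ?thesis
    proof (rule AE_mp, intro AE_I2 impI)
      fix \<omega> assume "\<omega> \<in> space M" "eventually (\<lambda>n. \<omega> \<in> space M - A n) sequentially"
      then have "eventually (\<lambda>n. \<bar>(\<Sum>i\<in>{1..Suc n}. \<phi> (X i \<omega>)) / real (Suc n) - (\<integral>x. \<phi> x \<partial>F)\<bar> < \<epsilon>) sequentially"
        by (auto simp: A_def elim!: eventually_mono)
      then show "eventually (\<lambda>n. \<bar>(\<Sum>i\<in>{1..n}. \<phi> (X i \<omega>)) / real n - (\<integral>x. \<phi> x \<partial>F)\<bar> < 1 / real (Suc r)) sequentially"
        unfolding \<epsilon>_def by (subst eventually_sequentially_Suc[symmetric])
    qed
  qed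
  have "AE \<omega> in M. \<forall>r. eventually (\<lambda>n. \<bar>(\<Sum>i\<in>{1..n}. \<phi> (X i \<omega>)) / real n - (\<integral>x. \<phi> x \<partial>F)\<bar> < 1 / real (Suc r)) sequentially"
    by (simp only: AE_all_countable) (use ev in blast)
  then show ?thesis by (rule AE_mp) (auto intro!: AE_I2 tendsto_from_rat)
qed

lemma small_measure_lim:
  "(\<lambda>r. measure F {x. 0 < EDh x \<and> EDh x < 1 / real (Suc r)}) \<longlonglongrightarrow> 0"
proof -
  interpret F: prob_space F by (rule F_prob)
  define A where "A r = {x. 0 < EDh x \<and> EDh x < 1 / real (Suc r)}" for r
  have "range A \<subseteq> sets F" unfolding A_def by auto
  moreover have "decseq A"
  proof (rule decseq_SucI)
    fix r
    have "1 / real (Suc (Suc r)) \<le> 1 / real (Suc r)" by (intro divide_left_mono) auto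
    then show "A (Suc r) \<subseteq> A r"
      unfolding A_def by auto
  qed
  ultimately have "(\<lambda>r. measure F (A r)) \<longlonglongrightarrow> measure F (\<Inter>r. A r)"
    by (rule F.finite_Lim_measure_decseq)
  moreover have "(\<Inter>r. A r) = {}"
  proof (rule ccontr)
    assume "(\<Inter>r. A r) \<noteq> {}"
    then obtain x where x: "\<And>r. x \<in> A r" by auto
    then have pos: "EDh x > 0" by (auto simp: A_def)
    from ex_inverse_of_nat_less[OF pos] obtain n :: nat where "0 < n" "inverse (real n) < EDh x" by auto
    then have "1 / real (Suc (n - 1)) < EDh x" by (simp add: inverse_eq_divide)
    with x[of "n - 1"] show False by (auto simp: A_def)
  qed
  ultimately show ?thesis by (simp add: A_def)
qed

end


lemma ratio_bound:
  fixes D T :: nat and N d t \<epsilon> \<rho> :: real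
  assumes N: "N > 0" and eps: "0 < \<epsilon>" "\<epsilon> \<le> d" "d \<le> 1" and t: "0 \<le> t" "t \<le> d\<^sup>2"
    and u: "\<bar>real D / N - d\<bar> \<le> \<rho>" and v: "\<bar>2 * real T / N\<^sup>2 - t\<bar> \<le> \<rho>"
    and rN: "1 / N \<le> \<rho>" and rho: "\<rho> \<le> \<epsilon> / 4"
  shows "D \<ge> 2 \<and> \<bar>2 * real T / (real D * (real D - 1)) - t / d\<^sup>2\<bar> \<le> 20 * \<rho> / \<epsilon>\<^sup>2"
proof -
  define U where "U = real D / N"
  define V where "V = 2 * real T / N\<^sup>2"
  have rpos: "\<rho> > 0" using rN N by (meson divide_pos_pos less_le_trans zero_less_one)
  have Uu: "\<bar>U - d\<bar> \<le> \<rho>" using u by (simp add: U_def)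
  have U1: "U \<ge> 3 * \<epsilon> / 4" using Uu eps rho unfolding abs_le_iff by linarith
  have U2: "U \<le> 5 / 4" using Uu eps rho unfolding abs_le_iff by linarith
  have iN: "1 / N \<le> \<epsilon> / 4" using rN rho by simp
  have DU: "real D = U * N" using N by (simp add: U_def)
  have NN: "N \<ge> 4 / \<epsilon>"
  proof -
    have "1 \<le> \<epsilon> / 4 * N" using iN N by (simp add: field_simps)
    then show ?thesis using eps by (simp add: field_simps)
  qed
  have "real D \<ge> 3"
  proof -
    have "real D \<ge> 3 * \<epsilon> / 4 * N" using DU U1 N by (simp add: mult_right_mono)
    moreover have "3 * \<epsilon> / 4 * N \<ge> 3 * \<epsilon> / 4 * (4 / \<epsilon>)" using NN eps by (intro mult_left_mono) auto
    moreover have "3 * \<epsilon> / 4 * (4 / \<epsilon>) = 3" using eps by simp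
    ultimately show ?thesis by linarith
  qed
  then have D2: "D \<ge> 2" by simp
  define q where "q = U * (U - 1 / N)"
  have U3: "U - 1 / N \<ge> \<epsilon> / 2" using U1 iN by simp
  have q1: "q \<ge> \<epsilon>\<^sup>2 / 4"
  proof -
    have "q \<ge> (3 * \<epsilon> / 4) * (\<epsilon> / 2)" unfolding q_def
      using U1 U3 eps by (intro mult_mono) auto
    moreover have "(3 * \<epsilon> / 4) * (\<epsilon> / 2) = 3 / 8 * \<epsilon>\<^sup>2" by (simp add: power2_eq_square)
    moreover have "\<epsilon>\<^sup>2 \<ge> 0" by simp
    ultimately show ?thesis by linarith
  qed
  have qpos: "q > 0"
  proof -
    have "\<epsilon>\<^sup>2 > 0" using eps by simp
    then show ?thesis using q1 by linarith
  qed
  have DD: "real D * (real D - 1) = N\<^sup>2 * q"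
    unfolding q_def DU using N by (simp add: field_simps power2_eq_square)
  have C: "2 * real T / (real D * (real D - 1)) = V / q"
    unfolding DD V_def using N qpos by (simp add: field_simps)
  have qd: "\<bar>q - d\<^sup>2\<bar> \<le> 4 * \<rho>"
  proof -
    have e: "q - d\<^sup>2 = (U - d) * (U + d) - U * (1 / N)"
      unfolding q_def by (simp add: algebra_simps power2_eq_square)
    have a1: "\<bar>(U - d) * (U + d)\<bar> \<le> \<rho> * (9/4)"
    proof -
      have "\<bar>(U - d) * (U + d)\<bar> = \<bar>U - d\<bar> * \<bar>U + d\<bar>" by (simp add: abs_mult)
      also have "\<dots> \<le> \<rho> * (9/4)"
      proof (intro mult_mono)
        show "\<bar>U + d\<bar> \<le> 9/4" using U2 eps U1 unfolding abs_le_iff by linarith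
      qed (use Uu in auto)
      finally show ?thesis .
    qed
    have a2: "\<bar>U * (1 / N)\<bar> \<le> (5/4) * \<rho>"
    proof -
      have "\<bar>U * (1 / N)\<bar> = U * (1 / N)" using U1 eps N by simp
      also have "\<dots> \<le> (5/4) * \<rho>" using U2 rN U1 eps N by (intro mult_mono) auto
      finally show ?thesis .
    qed
    have "\<bar>(U - d) * (U + d) - U * (1 / N)\<bar> \<le> \<bar>(U - d) * (U + d)\<bar> + \<bar>U * (1 / N)\<bar>"
      by (rule abs_triangle_ineq4)
    then show ?thesis unfolding e using a1 a2 by linarith
  qed
  have dpos: "d\<^sup>2 > 0" using eps by simp
  have vt: "\<bar>V - t\<bar> \<le> \<rho>" using v by (simp add: V_def)
  have "\<bar>V / q - t / d\<^sup>2\<bar> = \<bar>(V - t) * d\<^sup>2 + t * (d\<^sup>2 - q)\<bar> / (q * d\<^sup>2)"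
    using qpos dpos by (simp add: field_simps abs_divide abs_mult)
  also have "\<dots> \<le> (\<rho> * d\<^sup>2 + d\<^sup>2 * (4 * \<rho>)) / (q * d\<^sup>2)"
  proof (intro divide_right_mono)
    have "\<bar>(V - t) * d\<^sup>2\<bar> \<le> \<rho> * d\<^sup>2" using vt dpos by (simp add: abs_mult mult_right_mono)
    moreover have "\<bar>t * (d\<^sup>2 - q)\<bar> \<le> d\<^sup>2 * (4 * \<rho>)"
      using t qd by (simp add: abs_mult abs_minus_commute mult_mono)
    ultimately show "\<bar>(V - t) * d\<^sup>2 + t * (d\<^sup>2 - q)\<bar> \<le> \<rho> * d\<^sup>2 + d\<^sup>2 * (4 * \<rho>)"
      by (smt (verit) abs_triangle_ineq)
  qed (use qpos dpos in simp)
  also have "\<dots> = 5 * \<rho> / q" using dpos qpos by (simp add: field_simps)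
  also have "\<dots> \<le> 5 * \<rho> / (\<epsilon>\<^sup>2 / 4)"
    using q1 rpos eps qpos by (intro divide_left_mono) auto
  also have "\<dots> = 20 * \<rho> / \<epsilon>\<^sup>2" by simp
  finally show ?thesis using D2 C by simp
qed


lemma interp_D:
  fixes Da Dn Db N M d \<delta> :: real
  assumes M: "M \<ge> 1" and N: "M\<^sup>2 \<le> N" "N \<le> (M+1)\<^sup>2 - 1"
    and d: "0 \<le> d" "d \<le> 1" and \<delta>: "\<delta> \<ge> 0"
    and mono: "Da \<le> Dn" "Dn \<le> Db"
    and ga: "\<bar>Da - (M\<^sup>2 - 1) * d\<bar> < \<delta> * M\<^sup>2"
    and gb: "\<bar>Db - ((M+1)\<^sup>2 - 1) * d\<bar> < \<delta> * (M+1)\<^sup>2"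
  shows "\<bar>Dn / N - d\<bar> \<le> 4 * \<delta> + 3 / M"
proof -
  define A where "A = M\<^sup>2"
  define Bq where "Bq = (M+1)\<^sup>2"
  have Bq4: "Bq \<le> 4 * A"
  proof -
    have h: "1 * M \<le> M * M" using M by (intro mult_right_mono) auto
    have e1: "(M+1)\<^sup>2 = M * M + 2 * M + 1" by (simp add: power2_eq_square algebra_simps)
    have e2: "M\<^sup>2 = M * M" by (simp add: power2_eq_square)
    show ?thesis unfolding A_def Bq_def e1 e2 using h M by linarith
  qed
  have BA: "Bq = A + 2 * M + 1" unfolding A_def Bq_def by (simp add: power2_eq_square algebra_simps)
  have Npos: "N > 0" using N M unfolding A_def by (smt (verit) one_le_power)
  have l1: "(A - 1 - N) * d \<ge> A - 1 - N"
  proof -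
    have "(A - 1 - N) * (d - 1) \<ge> 0" using N d by (intro mult_nonpos_nonpos) (auto simp: A_def)
    then show ?thesis by (simp add: algebra_simps)
  qed
  have u1: "(Bq - 1 - N) * d \<le> Bq - 1 - N"
  proof -
    have "(Bq - 1 - N) * (1 - d) \<ge> 0" using N d by (intro mult_nonneg_nonneg) (auto simp: Bq_def)
    then show ?thesis by (simp add: algebra_simps)
  qed
  have lo: "Dn - N * d \<ge> -(4 * \<delta> * N + 3 * M)"
  proof -
    have "Dn - N * d \<ge> Da - N * d" using mono by simp
    moreover have "Da > (A - 1) * d - \<delta> * A" using ga unfolding A_def abs_less_iff by linarith
    moreover have "\<delta> * A \<le> \<delta> * N" using \<delta> N by (intro mult_left_mono) (auto simp: A_def)
    moreover have "(A - 1) * d - N * d = (A - 1 - N) * d" by (simp add: algebra_simps)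
    moreover have "\<delta> * N \<le> 4 * \<delta> * N" using \<delta> Npos by simp
    ultimately show ?thesis using l1 N BA M unfolding Bq_def[symmetric] A_def[symmetric] by linarith
  qed
  have hi: "Dn - N * d \<le> 4 * \<delta> * N + 3 * M"
  proof -
    have "Dn - N * d \<le> Db - N * d" using mono by simp
    moreover have "Db < (Bq - 1) * d + \<delta> * Bq" using gb unfolding Bq_def abs_less_iff by linarith
    moreover have "\<delta> * Bq \<le> \<delta> * (4 * N)" using \<delta> Bq4 N by (intro mult_left_mono) (auto simp: A_def)
    moreover have "(Bq - 1) * d - N * d = (Bq - 1 - N) * d" by (simp add: algebra_simps)
    ultimately show ?thesis using u1 N BA M unfolding Bq_def[symmetric] A_def[symmetric] by linarith
  qed
  have "\<bar>Dn / N - d\<bar> = \<bar>Dn - N * d\<bar> / N" using Npos by (simp add: field_simps abs_divide)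
  also have "\<dots> \<le> (4 * \<delta> * N + 3 * M) / N" using lo hi Npos by (intro divide_right_mono) auto
  also have "\<dots> = 4 * \<delta> + 3 * M / N" using Npos by (simp add: field_simps)
  also have "3 * M / N \<le> 3 * M / M\<^sup>2" using N M Npos by (intro divide_left_mono) auto
  also have "3 * M / M\<^sup>2 = 3 / M" using M by (simp add: power2_eq_square)
  finally show ?thesis by simp
qed

lemma interp_T:
  fixes Ta Tn Tb N M t \<delta> :: real
  assumes M: "M \<ge> 1" and N: "M\<^sup>2 \<le> N" "N \<le> (M+1)\<^sup>2 - 1"
    and t: "0 \<le> t" "t \<le> 1" and \<delta>: "\<delta> \<ge> 0"
    and mono: "Ta \<le> Tn" "Tn \<le> Tb"
    and ga: "\<bar>2 * Ta - (M\<^sup>2 - 1) * (M\<^sup>2 - 2) * t\<bar> < \<delta> * (M\<^sup>2)\<^sup>2"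
    and gb: "\<bar>2 * Tb - ((M+1)\<^sup>2 - 1) * ((M+1)\<^sup>2 - 2) * t\<bar> < \<delta> * ((M+1)\<^sup>2)\<^sup>2"
  shows "\<bar>2 * Tn / N\<^sup>2 - t\<bar> \<le> 16 * \<delta> + 18 / M"
proof -
  define A where "A = M\<^sup>2"
  define Bq where "Bq = (M+1)\<^sup>2"
  define E where "E = Bq\<^sup>2 - (A - 1) * (A - 2)"
  have A1: "A \<ge> 1" using one_le_power[OF M, of 2] unfolding A_def .
  have Bq4: "Bq \<le> 4 * A"
  proof -
    have h: "1 * M \<le> M * M" using M by (intro mult_right_mono) auto
    have e1: "(M+1)\<^sup>2 = M * M + 2 * M + 1" by (simp add: power2_eq_square algebra_simps)
    have e2: "M\<^sup>2 = M * M" by (simp add: power2_eq_square)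
    show ?thesis unfolding A_def Bq_def e1 e2 using h M by linarith
  qed
  have NB: "N \<le> Bq" using N unfolding Bq_def by simp
  have AN: "A \<le> N" using N unfolding A_def by simp
  have Npos: "N > 0" using AN A1 by simp
  have E1: "E = 4 * M^3 + 9 * M\<^sup>2 + 4 * M - 1"
    unfolding E_def A_def Bq_def by (simp add: power2_eq_square power3_eq_cube algebra_simps)
  have h1: "1 * M \<le> M * M" using M by (intro mult_right_mono) auto
  have h2: "1 * (M * M) \<le> M * (M * M)" using M by (intro mult_right_mono) auto
  have M2: "M \<le> M^3" "M\<^sup>2 \<le> M^3" using h1 h2
    by (simp_all add: power3_eq_cube power2_eq_square)
  have E18: "E \<le> 18 * M^3" using E1 M2 M by linarith
  have A2: "(A - 1) * (A - 2) \<le> A\<^sup>2" using A1 by (simp add: power2_eq_square algebra_simps)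
  have AN2: "A\<^sup>2 \<le> N\<^sup>2" using AN A1 by (intro power_mono) auto
  have NB2: "N\<^sup>2 \<le> Bq\<^sup>2" using NB Npos by (intro power_mono) auto
  have Bq1: "Bq \<ge> 1" using AN NB A1 by linarith
  have B2: "(Bq - 1) * (Bq - 2) \<le> Bq\<^sup>2" using Bq1 by (simp add: power2_eq_square algebra_simps)
  have E0: "E \<ge> 0" using A2 AN2 NB2 unfolding E_def by linarith
  have lo: "2 * Tn - N\<^sup>2 * t \<ge> -(E + 16 * \<delta> * N\<^sup>2)"
  proof -
    define Xc where "Xc = (A - 1) * (A - 2) - N\<^sup>2"
    have XE: "Xc \<ge> -E" unfolding Xc_def E_def using NB2 by linarith
    have Xt: "Xc * t \<ge> -E"
    proof (cases "Xc \<ge> 0")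
      case True
      have "Xc * t \<ge> 0" using True t by (intro mult_nonneg_nonneg) auto
      then show ?thesis using E0 by linarith
    next
      case False
      then have "Xc * t \<ge> Xc * 1" using t by (intro mult_left_mono_neg) auto
      then show ?thesis using XE by simp
    qed
    have "2 * Ta > (A - 1) * (A - 2) * t - \<delta> * A\<^sup>2" using ga unfolding A_def abs_less_iff by linarith
    moreover have "\<delta> * A\<^sup>2 \<le> 16 * \<delta> * N\<^sup>2"
    proof -
      have "\<delta> * A\<^sup>2 \<le> \<delta> * N\<^sup>2" by (rule mult_left_mono[OF AN2 \<delta>])
      moreover have "\<delta> * N\<^sup>2 \<ge> 0" using \<delta> by simp
      ultimately show ?thesis by linarith
    qed
    moreover have "(A - 1) * (A - 2) * t - N\<^sup>2 * t = Xc * t" by (simp add: Xc_def algebra_simps)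
    ultimately show ?thesis using mono Xt by linarith
  qed
  have hi: "2 * Tn - N\<^sup>2 * t \<le> E + 16 * \<delta> * N\<^sup>2"
  proof -
    define Yc where "Yc = (Bq - 1) * (Bq - 2) - N\<^sup>2"
    have YE: "Yc \<le> E" unfolding Yc_def E_def using B2 A2 AN2 by linarith
    have Yt: "Yc * t \<le> E"
    proof (cases "Yc \<ge> 0")
      case True
      then have "Yc * t \<le> Yc * 1" using t by (intro mult_left_mono) auto
      then show ?thesis using YE by simp
    next
      case False
      have "Yc * t \<le> 0" using False t by (intro mult_nonpos_nonneg) auto
      then show ?thesis using E0 by linarith
    qed
    have "2 * Tb < (Bq - 1) * (Bq - 2) * t + \<delta> * Bq\<^sup>2" using gb unfolding Bq_def abs_less_iff by linarith
    moreover have "Bq\<^sup>2 \<le> 16 * N\<^sup>2"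
    proof -
      have "Bq\<^sup>2 \<le> (4 * N)\<^sup>2" using Bq4 AN A1 by (intro power_mono) (auto simp: Bq_def)
      then show ?thesis by (simp add: power2_eq_square)
    qed
    then have "\<delta> * Bq\<^sup>2 \<le> \<delta> * (16 * N\<^sup>2)" using \<delta> by (intro mult_left_mono) auto
    then have "\<delta> * Bq\<^sup>2 \<le> 16 * \<delta> * N\<^sup>2" by simp
    moreover have "(Bq - 1) * (Bq - 2) * t - N\<^sup>2 * t = Yc * t" by (simp add: Yc_def algebra_simps)
    ultimately show ?thesis using mono Yt by linarith
  qed
  have N2: "N\<^sup>2 > 0" using Npos by simp
  have "\<bar>2 * Tn / N\<^sup>2 - t\<bar> = \<bar>2 * Tn - N\<^sup>2 * t\<bar> / N\<^sup>2" using N2 by (simp add: field_simps abs_divide)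
  also have "\<dots> \<le> (E + 16 * \<delta> * N\<^sup>2) / N\<^sup>2" using lo hi N2 by (intro divide_right_mono) auto
  also have "\<dots> = 16 * \<delta> + E / N\<^sup>2" using N2 by (simp add: field_simps)
  also have "E / N\<^sup>2 \<le> 18 * M^3 / N\<^sup>2" using E18 N2 by (intro divide_right_mono) auto
  also have "18 * M^3 / N\<^sup>2 \<le> 18 * M^3 / A\<^sup>2" using AN2 A1 M N2 by (intro divide_left_mono) auto
  also have "18 * M^3 / A\<^sup>2 = 18 / M" using M unfolding A_def by (simp add: field_simps power2_eq_square power3_eq_cube)
  finally show ?thesis by simp
qed


definition badP :: "(nat \<Rightarrow> nat \<Rightarrow> nat) \<Rightarrow> (nat \<Rightarrow> nat \<Rightarrow> nat) \<Rightarrow> (nat \<Rightarrow> real) \<Rightarrow> (nat \<Rightarrow> real) \<Rightarrow> real \<Rightarrow> nat \<Rightarrow> nat \<Rightarrow> bool" where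
  "badP Dn Tn d t \<delta> n i \<longleftrightarrow> \<bar>real (Dn n i) - (real n - 1) * d i\<bar> \<ge> \<delta> * real n \<or>
      \<bar>2 * real (Tn n i) - (real n - 1) * (real n - 2) * t i\<bar> \<ge> \<delta> * real n ^ 2"

lemma sqrt_exists: "\<exists>m. m\<^sup>2 \<le> n \<and> n < (Suc m)\<^sup>2"
proof (induction n)
  case 0 show ?case by (intro exI[of _ 0]) auto
next
  case (Suc n)
  then obtain m where m: "m\<^sup>2 \<le> n" "n < (Suc m)\<^sup>2" by auto
  show ?case
  proof (cases "Suc n < (Suc m)\<^sup>2")
    case True then show ?thesis using m by (intro exI[of _ m]) auto
  next
    case False
    then have "Suc n = (Suc m)\<^sup>2" using m by simp
    moreover have "(Suc m)\<^sup>2 < (Suc (Suc m))\<^sup>2" by (simp add: power2_eq_square)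
    ultimately show ?thesis by (intro exI[of _ "Suc m"]) auto
  qed
qed

lemma good_vertex:
  fixes Dn Tn :: "nat \<Rightarrow> nat \<Rightarrow> nat" and d t :: "nat \<Rightarrow> real"
  assumes m: "m \<ge> 1" and n: "m\<^sup>2 \<le> n" "n < (Suc m)\<^sup>2"
    and Dmono: "\<And>n n'. n \<le> n' \<Longrightarrow> Dn n i \<le> Dn n' i"
    and Tmono: "\<And>n n'. n \<le> n' \<Longrightarrow> Tn n i \<le> Tn n' i"
    and dt: "0 \<le> d i" "d i \<le> 1" "0 \<le> t i" "t i \<le> (d i)\<^sup>2"
    and eps: "0 < \<epsilon>" "\<epsilon> \<le> d i"
    and \<delta>: "\<delta> \<ge> 0" "4 * \<delta> + 3 / real m \<le> \<rho>" "16 * \<delta> + 18 / real m \<le> \<rho>"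
    and rho: "\<rho> \<le> \<epsilon> / 4" "1 / real m \<le> \<rho>"
    and ga: "\<not> badP Dn Tn d t \<delta> (m\<^sup>2) i" and gb: "\<not> badP Dn Tn d t \<delta> ((Suc m)\<^sup>2) i"
  shows "Dn n i \<ge> 2 \<and> \<bar>2 * real (Tn n i) / (real (Dn n i) * (real (Dn n i) - 1)) - t i / (d i)\<^sup>2\<bar> \<le> 20 * \<rho> / \<epsilon>\<^sup>2"
proof -
  define M where "M = real m"
  have M1: "M \<ge> 1" using m by (simp add: M_def)
  have N1: "M\<^sup>2 \<le> real n" using n by (simp add: M_def flip: of_nat_power)
  have N2: "real n \<le> (M+1)\<^sup>2 - 1"
  proof -
    have "n + 1 \<le> (Suc m)\<^sup>2" using n by simp
    then have "real n + 1 \<le> real ((Suc m)\<^sup>2)" by (metis of_nat_1 of_nat_add of_nat_le_iff)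
    then show ?thesis by (simp add: M_def add.commute)
  qed
  have t1: "t i \<le> 1"
  proof -
    have "(d i)\<^sup>2 \<le> 1" using dt by (simp add: power_le_one)
    then show ?thesis using dt by linarith
  qed
  have ra: "real (m\<^sup>2) = M\<^sup>2" and rb: "real ((Suc m)\<^sup>2) = (M+1)\<^sup>2" by (simp_all add: M_def)
  have D: "\<bar>real (Dn n i) / real n - d i\<bar> \<le> 4 * \<delta> + 3 / M"
  proof (rule interp_D[OF M1 N1 N2 dt(1,2) \<delta>(1)])
    show "real (Dn (m\<^sup>2) i) \<le> real (Dn n i)" using Dmono[OF n(1)] by simp
    show "real (Dn n i) \<le> real (Dn ((Suc m)\<^sup>2) i)" using Dmono[of n "(Suc m)\<^sup>2"] n by simp
    show "\<bar>real (Dn (m\<^sup>2) i) - (M\<^sup>2 - 1) * d i\<bar> < \<delta> * M\<^sup>2"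
      using ga unfolding badP_def ra by simp
    show "\<bar>real (Dn ((Suc m)\<^sup>2) i) - ((M + 1)\<^sup>2 - 1) * d i\<bar> < \<delta> * (M + 1)\<^sup>2"
      using gb unfolding badP_def rb by simp
  qed
  have T: "\<bar>2 * real (Tn n i) / (real n)\<^sup>2 - t i\<bar> \<le> 16 * \<delta> + 18 / M"
  proof (rule interp_T[OF M1 N1 N2 dt(3) t1 \<delta>(1)])
    show "real (Tn (m\<^sup>2) i) \<le> real (Tn n i)" using Tmono[OF n(1)] by simp
    show "real (Tn n i) \<le> real (Tn ((Suc m)\<^sup>2) i)" using Tmono[of n "(Suc m)\<^sup>2"] n by simp
    show "\<bar>2 * real (Tn (m\<^sup>2) i) - (M\<^sup>2 - 1) * (M\<^sup>2 - 2) * t i\<bar> < \<delta> * (M\<^sup>2)\<^sup>2"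
      using ga unfolding badP_def ra by simp
    show "\<bar>2 * real (Tn ((Suc m)\<^sup>2) i) - ((M + 1)\<^sup>2 - 1) * ((M + 1)\<^sup>2 - 2) * t i\<bar> < \<delta> * ((M + 1)\<^sup>2)\<^sup>2"
      using gb unfolding badP_def rb by simp
  qed
  have Npos: "real n > 0" using N1 M1 by (smt (verit) one_le_power)
  have rN: "1 / real n \<le> \<rho>"
  proof -
    have "M \<le> M\<^sup>2" using M1 by (simp add: power2_eq_square)
    then have "M \<le> real n" using N1 by linarith
    then have "1 / real n \<le> 1 / M" using M1 by (intro divide_left_mono) auto
    then show ?thesis using rho by (simp add: M_def)
  qed
  show ?thesis
  proof (rule ratio_bound[OF Npos eps(1) eps(2) dt(2) dt(3) dt(4) _ _ rN rho(1)])
    show "\<bar>real (Dn n i) / real n - d i\<bar> \<le> \<rho>" using D \<delta> by (simp add: M_def)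
    show "\<bar>2 * real (Tn n i) / (real n)\<^sup>2 - t i\<bar> \<le> \<rho>" using T \<delta> by (simp add: M_def)
  qed
qed


lemma sum_count':
  fixes A :: "'a set"
  assumes "finite A"
  shows "real (card {j\<in>A. P j}) = (\<Sum>j\<in>A. if P j then 1 else 0)"
proof -
  have "real (card {j\<in>A. P j}) = (\<Sum>j\<in>{j\<in>A. P j}. 1)" by simp
  also have "\<dots> = (\<Sum>j\<in>A. if P j then 1 else 0)" using assms by (rule sum.inter_filter)
  finally show ?thesis .
qed

lemma obtain_inv:
  fixes x :: real
  assumes "x > 0"
  obtains r where "1 / real (Suc r) \<le> x"
proof -
  from ex_inverse_of_nat_less[OF assms] obtain n :: nat where "0 < n" "inverse (real n) < x" by auto
  then have "1 / real (Suc (n - 1)) \<le> x" by (simp add: inverse_eq_divide)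
  then show ?thesis by (rule that)
qed

lemma det_main_claim:
  fixes Dn Tn :: "nat \<Rightarrow> nat \<Rightarrow> nat" and Cn :: "nat \<Rightarrow> nat \<Rightarrow> real" and c d t p :: "nat \<Rightarrow> real" and K \<gamma> :: real
  assumes K: "K > 0" and \<gamma>: "\<gamma> > 0"
    and Kb: "\<And>n i. i \<in> {1..n} \<Longrightarrow> \<bar>Cn n i - c i\<bar> \<le> K"
    and Dmono: "\<And>n n' i. n \<le> n' \<Longrightarrow> Dn n i \<le> Dn n' i"
    and Tmono: "\<And>n n' i. n \<le> n' \<Longrightarrow> Tn n i \<le> Tn n' i"
    and small: "\<And>r. (\<lambda>n. real (card {i\<in>{1..n}. 0 < d i \<and> d i < 1 / real (Suc r)}) / real n) \<longlonglongrightarrow> p r"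
    and p0: "p \<longlonglongrightarrow> 0"
    and zero: "\<And>n i. i \<in> {1..n} \<Longrightarrow> d i = 0 \<Longrightarrow> Cn n i = c i"
    and dt: "\<And>i. 0 \<le> d i \<and> d i \<le> 1 \<and> 0 \<le> t i \<and> t i \<le> (d i)\<^sup>2"
    and cd: "\<And>i. d i > 0 \<Longrightarrow> c i = t i / (d i)\<^sup>2"
    and Cform: "\<And>n i. i \<in> {1..n} \<Longrightarrow> Dn n i \<ge> 2 \<Longrightarrow> Cn n i = 2 * real (Tn n i) / (real (Dn n i) * (real (Dn n i) - 1))"
    and badc: "\<And>r s. eventually (\<lambda>k. real (card {i\<in>{1..(Suc k)\<^sup>2}. badP Dn Tn d t (1 / real (Suc r)) ((Suc k)\<^sup>2) i})
                  < 1 / real (Suc s) * real ((Suc k)\<^sup>2)) sequentially"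
  shows "eventually (\<lambda>n. (\<Sum>i\<in>{1..n}. \<bar>Cn n i - c i\<bar>) \<le> \<gamma> * real n) sequentially"
proof -
  have g8: "\<gamma> / (8 * K) > 0" using K \<gamma> by simp
  have "eventually (\<lambda>r. p r < \<gamma> / (8 * K)) sequentially" by (rule order_tendstoD(2)[OF p0 g8])
  then obtain r where pr: "p r < \<gamma> / (8 * K)" by (auto simp: eventually_sequentially)
  define \<epsilon> where "\<epsilon> = 1 / real (Suc r)"
  have eps: "0 < \<epsilon>" "\<epsilon> \<le> 1" by (auto simp: \<epsilon>_def)
  have "\<gamma> / (8 * K) \<le> \<gamma> / (4 * K)" using K \<gamma> by (intro divide_left_mono) auto
  then have "p r < \<gamma> / (4 * K)" using pr by linarith
  then have "eventually (\<lambda>n. real (card {i\<in>{1..n}. 0 < d i \<and> d i < \<epsilon>}) / real n < \<gamma> / (4 * K)) sequentially"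
    unfolding \<epsilon>_def by (rule order_tendstoD(2)[OF small])
  then obtain N1 where N1: "\<And>n. n \<ge> N1 \<Longrightarrow> real (card {i\<in>{1..n}. 0 < d i \<and> d i < \<epsilon>}) / real n < \<gamma> / (4 * K)"
    by (auto simp: eventually_sequentially)
  define \<rho> where "\<rho> = min (\<epsilon> / 4) (\<gamma> * \<epsilon>\<^sup>2 / 80)"
  have rho: "\<rho> > 0" "\<rho> \<le> \<epsilon> / 4" "\<rho> \<le> \<gamma> * \<epsilon>\<^sup>2 / 80" using eps \<gamma> by (auto simp: \<rho>_def)
  obtain r' where r': "1 / real (Suc r') \<le> \<rho> / 32" by (rule obtain_inv[of "\<rho> / 32"]) (use rho in simp_all)
  define \<delta> where "\<delta> = 1 / real (Suc r')"
  have dl: "\<delta> > 0" "\<delta> \<le> \<rho> / 32" using r' by (auto simp: \<delta>_def)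
  obtain s where s: "1 / real (Suc s) \<le> \<gamma> / (20 * K)" by (rule obtain_inv[of "\<gamma> / (20 * K)"]) (use K \<gamma> in simp_all)
  define \<eta> where "\<eta> = 1 / real (Suc s)"
  have et: "\<eta> > 0" "\<eta> \<le> \<gamma> / (20 * K)" using s by (auto simp: \<eta>_def)
  from badc[of r' s] obtain k0 where k0: "\<And>k. k \<ge> k0 \<Longrightarrow>
      real (card {i\<in>{1..(Suc k)\<^sup>2}. badP Dn Tn d t \<delta> ((Suc k)\<^sup>2) i}) < \<eta> * real ((Suc k)\<^sup>2)"
    unfolding \<delta>_def \<eta>_def by (auto simp: eventually_sequentially)
  obtain a1 :: nat where a1: "36 / \<rho> \<le> real a1" using real_arch_simple by blast
  obtain a2 :: nat where a2: "8 * K / \<gamma> \<le> real a2" using real_arch_simple by blast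
  define m1 where "m1 = max (Suc k0) (max a1 a2)"
  have m1: "m1 \<ge> Suc k0" "36 / \<rho> \<le> real m1" "8 * K / \<gamma> \<le> real m1"
    using a1 a2 by (auto simp: m1_def)
  show ?thesis unfolding eventually_sequentially
  proof (intro exI[of _ "max N1 (m1\<^sup>2)"] allI impI)
    fix n assume nN: "max N1 (m1\<^sup>2) \<le> n"
    obtain m where mn: "m\<^sup>2 \<le> n" "n < (Suc m)\<^sup>2" using sqrt_exists by blast
    have mm1: "m \<ge> m1"
    proof (rule ccontr)
      assume "\<not> m \<ge> m1"
      then have "Suc m \<le> m1" by simp
      then have "(Suc m)\<^sup>2 \<le> m1\<^sup>2" by (rule power_mono) simp
      then show False using mn nN by linarith
    qed
    have m_ge1: "m \<ge> 1" using mm1 m1 by simp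
    have mpos: "real m > 0" using m_ge1 by simp
    have "real m1 \<le> real m" using mm1 by simp
    then have mr: "36 / \<rho> \<le> real m" and mK: "8 * K / \<gamma> \<le> real m" using m1 by linarith+
    have im: "1 / real m \<le> \<rho> / 36"
    proof -
      have "36 \<le> \<rho> * real m" using mr rho by (simp add: field_simps)
      then show ?thesis using mpos by (simp add: field_simps)
    qed
    have e3: "3 / real m = 3 * (1 / real m)" and e18: "18 / real m = 18 * (1 / real m)" by simp_all
    have c1: "4 * \<delta> + 3 / real m \<le> \<rho>" and c2: "16 * \<delta> + 18 / real m \<le> \<rho>" and c3: "1 / real m \<le> \<rho>"
      unfolding e3 e18 using im dl rho by linarith+
    let ?a = "m\<^sup>2" and ?b = "(Suc m)\<^sup>2"
    have ba: "card {i\<in>{1..?a}. badP Dn Tn d t \<delta> ?a i} < \<eta> * real ?a"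
      using k0[of "m - 1"] m_ge1 mm1 m1 by simp
    have bb: "card {i\<in>{1..?b}. badP Dn Tn d t \<delta> ?b i} < \<eta> * real ?b"
      using k0[of m] mm1 m1 by simp
    define P where "P i \<longleftrightarrow> (0 < d i \<and> d i < \<epsilon>) \<or> ?a < i \<or> badP Dn Tn d t \<delta> ?a i \<or> badP Dn Tn d t \<delta> ?b i" for i
    have pw: "\<bar>Cn n i - c i\<bar> \<le> K * (if P i then 1 else 0) + \<gamma> / 4" if i: "i \<in> {1..n}" for i
    proof (cases "P i")
      case True then show ?thesis using Kb[OF i] \<gamma> by simp
    next
      case False
      show ?thesis
      proof (cases "d i = 0")
        case True then show ?thesis using zero[OF i] \<gamma> False by simp
      next
        case dn0: False
        have dpos: "d i > 0" using dt[of i] dn0 by auto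
        have de: "\<epsilon> \<le> d i" using False dpos by (auto simp: P_def)
        have ia: "i \<le> ?a" using False by (auto simp: P_def)
        have gv: "Dn n i \<ge> 2 \<and> \<bar>2 * real (Tn n i) / (real (Dn n i) * (real (Dn n i) - 1)) - t i / (d i)\<^sup>2\<bar> \<le> 20 * \<rho> / \<epsilon>\<^sup>2"
        proof (rule good_vertex[where Dn=Dn and Tn=Tn and i=i and d=d and t=t, OF m_ge1 mn Dmono Tmono])
          show "0 \<le> d i" "d i \<le> 1" "0 \<le> t i" "t i \<le> (d i)\<^sup>2" using dt[of i] by auto
          show "\<not> badP Dn Tn d t \<delta> ?a i" "\<not> badP Dn Tn d t \<delta> ?b i" using False by (auto simp: P_def)
        qed (use eps de dl c1 c2 c3 rho in auto)
        have "20 * \<rho> / \<epsilon>\<^sup>2 \<le> 20 * (\<gamma> * \<epsilon>\<^sup>2 / 80) / \<epsilon>\<^sup>2"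
          using rho eps by (intro divide_right_mono mult_left_mono) auto
        also have "\<dots> = \<gamma> / 4" using eps by simp
        finally have "\<bar>Cn n i - c i\<bar> \<le> \<gamma> / 4"
          using gv Cform[OF i] cd[OF dpos] by simp
        then show ?thesis using False by simp
      qed
    qed
    have "(\<Sum>i\<in>{1..n}. \<bar>Cn n i - c i\<bar>) \<le> (\<Sum>i\<in>{1..n}. K * (if P i then 1 else 0) + \<gamma> / 4)"
      by (intro sum_mono pw)
    also have "\<dots> = K * real (card {i\<in>{1..n}. P i}) + real n * (\<gamma> / 4)"
    proof -
      have "real (card {i\<in>{1..n}. P i}) = (\<Sum>i\<in>{1..n}. if P i then 1 else 0)"
        by (rule sum_count') simp
      then show ?thesis by (simp add: sum.distrib sum_distrib_left[symmetric])
    qed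
    also have "real (card {i\<in>{1..n}. P i}) \<le> real (card {i\<in>{1..n}. 0 < d i \<and> d i < \<epsilon>}) + 2 * real m
         + \<eta> * real ?a + \<eta> * real ?b"
    proof -
      let ?S1 = "{i\<in>{1..n}. 0 < d i \<and> d i < \<epsilon>}"
      let ?S2 = "{?a<..n}"
      let ?S3 = "{i\<in>{1..?a}. badP Dn Tn d t \<delta> ?a i}"
      let ?S4 = "{i\<in>{1..?b}. badP Dn Tn d t \<delta> ?b i}"
      have sub: "{i\<in>{1..n}. P i} \<subseteq> ?S1 \<union> ?S2 \<union> ?S3 \<union> ?S4"
        using mn by (auto simp: P_def not_less)
      have x1: "card {i\<in>{1..n}. P i} \<le> card (?S1 \<union> ?S2 \<union> ?S3 \<union> ?S4)"
        by (rule card_mono[OF _ sub]) auto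
      have x2: "card (?S1 \<union> ?S2 \<union> ?S3 \<union> ?S4) \<le> card (?S1 \<union> ?S2 \<union> ?S3) + card ?S4" by (rule card_Un_le)
      have x3: "card (?S1 \<union> ?S2 \<union> ?S3) \<le> card (?S1 \<union> ?S2) + card ?S3" by (rule card_Un_le)
      have x4: "card (?S1 \<union> ?S2) \<le> card ?S1 + card ?S2" by (rule card_Un_le)
      have "card {i\<in>{1..n}. P i} \<le> card ?S1 + card ?S2 + card ?S3 + card ?S4" using x1 x2 x3 x4 by linarith
      then have "real (card {i\<in>{1..n}. P i}) \<le> real (card ?S1 + card ?S2 + card ?S3 + card ?S4)"
        by (rule of_nat_mono)
      then have "real (card {i\<in>{1..n}. P i}) \<le> real (card ?S1) + real (card ?S2) + real (card ?S3) + real (card ?S4)"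
        by simp
      moreover have "card ?S2 \<le> 2 * m"
      proof -
        have "card ?S2 = n - ?a" by simp
        moreover have "n < ?a + 2 * m + 1" using mn by (simp add: power2_eq_square)
        ultimately show ?thesis by linarith
      qed
      then have "real (card ?S2) \<le> real (2 * m)" by (rule of_nat_mono)
      ultimately show ?thesis using ba bb by simp
    qed
    then have "K * real (card {i\<in>{1..n}. P i}) + real n * (\<gamma> / 4) \<le>
       K * (real (card {i\<in>{1..n}. 0 < d i \<and> d i < \<epsilon>}) + 2 * real m + \<eta> * real ?a + \<eta> * real ?b) + real n * (\<gamma> / 4)"
      using K by (intro add_right_mono mult_left_mono) auto
    also have "\<dots> \<le> \<gamma> * real n"
    proof -
      have "1 \<le> m\<^sup>2" using one_le_power[OF m_ge1, of 2] .
      then have npos: "real n > 0" using mn by simp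
      have n1: "n \<ge> N1" using nN by simp
      have t1: "K * real (card {i\<in>{1..n}. 0 < d i \<and> d i < \<epsilon>}) \<le> \<gamma> * real n / 4"
      proof -
        have "real (card {i\<in>{1..n}. 0 < d i \<and> d i < \<epsilon>}) < \<gamma> / (4 * K) * real n"
          using N1[OF n1] npos by (simp add: field_simps)
        then have "K * real (card {i\<in>{1..n}. 0 < d i \<and> d i < \<epsilon>}) \<le> K * (\<gamma> / (4 * K) * real n)"
          using K by (intro mult_left_mono) auto
        then show ?thesis using K by (simp add: field_simps)
      qed
      have t2: "K * (2 * real m) \<le> \<gamma> * real n / 4"
      proof -
        have "8 * K \<le> \<gamma> * real m" using mK \<gamma> by (simp add: field_simps)
        then have "8 * K * real m \<le> \<gamma> * real m * real m" using mpos by (intro mult_right_mono) auto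
        moreover have "real m * real m \<le> real n" using mn by (metis of_nat_le_iff of_nat_mult power2_eq_square)
        then have "\<gamma> * (real m * real m) \<le> \<gamma> * real n" using \<gamma> by (intro mult_left_mono) auto
        ultimately show ?thesis by (simp add: algebra_simps)
      qed
      have t3: "K * (\<eta> * real ?a + \<eta> * real ?b) \<le> \<gamma> * real n / 4"
      proof -
        have an: "real ?a \<le> real n" using mn by simp
        have bn: "real ?b \<le> 4 * real n"
        proof -
          have e1: "(Suc m)\<^sup>2 = m * m + 2 * m + 1" by (simp add: power2_eq_square)
          have e2: "m\<^sup>2 = m * m" by (simp add: power2_eq_square)
          have "m \<le> m * m" by (rule le_square)
          then have "(Suc m)\<^sup>2 \<le> 4 * m\<^sup>2" unfolding e1 e2 using m_ge1 by linarith
          then have "(Suc m)\<^sup>2 \<le> 4 * n" using mn by linarith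
          then have "real ((Suc m)\<^sup>2) \<le> real (4 * n)" by (rule of_nat_mono)
          then show ?thesis by simp
        qed
        have "\<eta> * real ?a \<le> \<eta> * real n" using an et by (intro mult_left_mono) auto
        moreover have "\<eta> * real ?b \<le> \<eta> * (4 * real n)" using bn et by (intro mult_left_mono) auto
        ultimately have "\<eta> * real ?a + \<eta> * real ?b \<le> \<eta> * (5 * real n)" by (simp add: algebra_simps)
        then have "K * (\<eta> * real ?a + \<eta> * real ?b) \<le> K * (\<eta> * (5 * real n))" using K by (intro mult_left_mono) auto
        also have "\<dots> = (K * \<eta>) * (5 * real n)" by simp
        also have "\<dots> \<le> (\<gamma> / 20) * (5 * real n)"
        proof (intro mult_right_mono)
          show "K * \<eta> \<le> \<gamma> / 20" using et K by (simp add: field_simps)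
        qed (use npos in auto)
        finally show ?thesis by simp
      qed
      show ?thesis using t1 t2 t3 by (simp add: algebra_simps)
    qed
    finally show "(\<Sum>i\<in>{1..n}. \<bar>Cn n i - c i\<bar>) \<le> \<gamma> * real n" .
  qed
qed


lemma det_main:
  fixes Dn Tn :: "nat \<Rightarrow> nat \<Rightarrow> nat" and Cn :: "nat \<Rightarrow> nat \<Rightarrow> real" and c d t p :: "nat \<Rightarrow> real" and K L :: real
  assumes K: "K > 0"
    and Kb: "\<And>n i. i \<in> {1..n} \<Longrightarrow> \<bar>Cn n i - c i\<bar> \<le> K"
    and Dmono: "\<And>n n' i. n \<le> n' \<Longrightarrow> Dn n i \<le> Dn n' i"
    and Tmono: "\<And>n n' i. n \<le> n' \<Longrightarrow> Tn n i \<le> Tn n' i"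
    and avgc: "(\<lambda>n. (\<Sum>i\<in>{1..n}. c i) / real n) \<longlonglongrightarrow> L"
    and small: "\<And>r. (\<lambda>n. real (card {i\<in>{1..n}. 0 < d i \<and> d i < 1 / real (Suc r)}) / real n) \<longlonglongrightarrow> p r"
    and p0: "p \<longlonglongrightarrow> 0"
    and zero: "\<And>n i. i \<in> {1..n} \<Longrightarrow> d i = 0 \<Longrightarrow> Cn n i = c i"
    and dt: "\<And>i. 0 \<le> d i \<and> d i \<le> 1 \<and> 0 \<le> t i \<and> t i \<le> (d i)\<^sup>2"
    and cd: "\<And>i. d i > 0 \<Longrightarrow> c i = t i / (d i)\<^sup>2"
    and Cform: "\<And>n i. i \<in> {1..n} \<Longrightarrow> Dn n i \<ge> 2 \<Longrightarrow> Cn n i = 2 * real (Tn n i) / (real (Dn n i) * (real (Dn n i) - 1))"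
    and badc: "\<And>r s. eventually (\<lambda>k. real (card {i\<in>{1..(Suc k)\<^sup>2}. badP Dn Tn d t (1 / real (Suc r)) ((Suc k)\<^sup>2) i})
                  < 1 / real (Suc s) * real ((Suc k)\<^sup>2)) sequentially"
  shows "(\<lambda>n. (\<Sum>i\<in>{1..n}. Cn n i) / real n) \<longlonglongrightarrow> L"
proof -
  have lim0: "(\<lambda>n. (\<Sum>i\<in>{1..n}. Cn n i) / real n - (\<Sum>i\<in>{1..n}. c i) / real n) \<longlonglongrightarrow> 0"
  proof (rule tendstoI)
    fix e :: real assume e: "e > 0"
    have "eventually (\<lambda>n. (\<Sum>i\<in>{1..n}. \<bar>Cn n i - c i\<bar>) \<le> e / 2 * real n) sequentially"
      by (rule det_main_claim[OF K _ Kb Dmono Tmono small p0 zero dt cd Cform badc]) (use e in simp)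
    then show "eventually (\<lambda>n. dist ((\<Sum>i\<in>{1..n}. Cn n i) / real n - (\<Sum>i\<in>{1..n}. c i) / real n) 0 < e) sequentially"
    proof (rule eventually_mono)
      fix n assume h: "(\<Sum>i\<in>{1..n}. \<bar>Cn n i - c i\<bar>) \<le> e / 2 * real n"
      show "dist ((\<Sum>i\<in>{1..n}. Cn n i) / real n - (\<Sum>i\<in>{1..n}. c i) / real n) 0 < e"
      proof (cases "n = 0")
        case True then show ?thesis using e by simp
      next
        case False
        then have np: "real n > 0" by simp
        have "dist ((\<Sum>i\<in>{1..n}. Cn n i) / real n - (\<Sum>i\<in>{1..n}. c i) / real n) 0
            = \<bar>\<Sum>i\<in>{1..n}. Cn n i - c i\<bar> / real n"
          using np by (simp add: dist_real_def sum_subtractf diff_divide_distrib[symmetric])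
        also have "\<dots> \<le> (\<Sum>i\<in>{1..n}. \<bar>Cn n i - c i\<bar>) / real n"
          using np by (intro divide_right_mono sum_abs) auto
        also have "\<dots> \<le> e / 2" using h np by (simp add: field_simps)
        also have "\<dots> < e" using e by simp
        finally show ?thesis .
      qed
    qed
  qed
  have "(\<lambda>n. ((\<Sum>i\<in>{1..n}. Cn n i) / real n - (\<Sum>i\<in>{1..n}. c i) / real n) + (\<Sum>i\<in>{1..n}. c i) / real n) \<longlonglongrightarrow> 0 + L"
    by (rule tendsto_add[OF lim0 avgc])
  then show ?thesis by simp
qed


context clust
begin

lemma ETh_le: "ETh x \<le> (EDh x)\<^sup>2"
proof -
  interpret F: prob_space F by (rule F_prob)
  have inner: "(\<integral>z. hT3 fc B x y z \<partial>F) \<le> hh fc B x y * EDh x" for y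
  proof -
    have i1: "integrable F (\<lambda>z. hT3 fc B x y z)"
      by (rule F.integrable_const_bound[where B=1]) auto
    have i2: "integrable F (\<lambda>z. hh fc B x y * hh fc B x z)"
      using hh_int[of x] by simp
    have "(\<integral>z. hT3 fc B x y z \<partial>F) \<le> (\<integral>z. hh fc B x y * hh fc B x z \<partial>F)"
    proof (rule integral_mono[OF i1 i2])
      fix z
      have "hh fc B x y * hh fc B x z * hh fc B y z \<le> hh fc B x y * hh fc B x z * 1"
        by (intro mult_left_mono) auto
      then show "hT3 fc B x y z \<le> hh fc B x y * hh fc B x z" by (simp add: hT3_def)
    qed
    also have "\<dots> = hh fc B x y * EDh x" unfolding EDh_def by simp
    finally show ?thesis .
  qed
  show ?thesis
  proof (cases "integrable F (\<lambda>y. \<integral>z. hT3 fc B x y z \<partial>F)")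
    case True
    have i2: "integrable F (\<lambda>y. hh fc B x y * EDh x)" using hh_int[of x] by simp
    have "ETh x \<le> (\<integral>y. hh fc B x y * EDh x \<partial>F)"
      unfolding ETh_def by (rule integral_mono[OF True i2 inner])
    also have "\<dots> = EDh x * EDh x" unfolding EDh_def by simp
    finally show ?thesis by (simp add: power2_eq_square)
  next
    case False
    then show ?thesis by (simp add: ETh_def not_integrable_integral_eq)
  qed
qed

lemma E_D_eq: "E_D F fc B = EDh"
  by (simp add: fun_eq_iff E_D_def EDh_def h_D_eq)

lemma E_T_eq: "E_T F fc B = ETh"
  by (simp add: fun_eq_iff E_T_def ETh_def h_T_eq)

lemma Clim_eq: "C_lim F fc B w x = (if EDh x > 0 then ETh x / (EDh x)\<^sup>2 else w)"
  using EDh01[of x] by (auto simp: C_lim_def E_D_eq E_T_eq indicator_def)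

lemma Clim_meas[measurable]: "C_lim F fc B w \<in> borel_measurable borel"
proof -
  have "(\<lambda>x. if EDh x > 0 then ETh x / (EDh x)\<^sup>2 else w) \<in> borel_measurable borel" by measurable
  then show ?thesis by (simp add: Clim_eq[abs_def])
qed

lemma Clim_range: "C_lim F fc B w x \<in> {0..1} \<or> C_lim F fc B w x = w"
proof (cases "EDh x > 0")
  case True
  have "ETh x / (EDh x)\<^sup>2 \<le> 1" using ETh_le[of x] True by simp
  moreover have "0 \<le> ETh x / (EDh x)\<^sup>2" using ETh01[of x] by simp
  ultimately show ?thesis using True by (simp add: Clim_eq)
qed (simp add: Clim_eq)

lemma SDs_eq:
  assumes i: "i \<in> {1..n}"
  shows "SDs n i \<omega> = real (degree_n fc B (\<lambda>k. X k \<omega>) n i) - (real n - 1) * EDh (X i \<omega>)"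
proof -
  have c: "card ({1..n} - {i}) = n - 1" using i by simp
  have "SDs n i \<omega> = (\<Sum>j\<in>{1..n}-{i}. hh fc B (X i \<omega>) (X j \<omega>)) - real (card ({1..n} - {i})) * EDh (X i \<omega>)"
    unfolding SDs_def by (simp add: sum_subtractf)
  also have "(\<Sum>j\<in>{1..n}-{i}. hh fc B (X i \<omega>) (X j \<omega>)) = real (degree_n fc B (\<lambda>k. X k \<omega>) n i)"
    using degree_sum[OF i, of fc B "\<lambda>k. X k \<omega>"] by simp
  finally show ?thesis using c i by (simp add: of_nat_diff)
qed

lemma STs_eq:
  assumes i: "i \<in> {1..n}"
  shows "STs n i \<omega> = 2 * real (triangles_n fc B (\<lambda>k. X k \<omega>) n i) - (real n - 1) * (real n - 2) * ETh (X i \<omega>)"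
proof -
  define A where "A = {1..n} - {i}"
  have fA: "finite A" by (simp add: A_def)
  have cA: "card A = n - 1" using i by (simp add: A_def)
  have cS: "card (SIGMA j:A. A - {j}) = card A * (card A - 1)"
  proof -
    have "card (SIGMA j:A. A - {j}) = (\<Sum>j\<in>A. card (A - {j}))" using fA by (simp add: card_SigmaI)
    also have "\<dots> = (\<Sum>j\<in>A. card A - 1)" using fA by (intro sum.cong refl) simp
    finally show ?thesis by simp
  qed
  have "STs n i \<omega> = (\<Sum>p\<in>(SIGMA j:A. A - {j}). hT3 fc B (X i \<omega>) (X (fst p) \<omega>) (X (snd p) \<omega>))
       - real (card (SIGMA j:A. A - {j})) * ETh (X i \<omega>)"
    unfolding STs_def A_def by (simp add: sum_subtractf Diff_insert2[symmetric] insert_commute)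
  also have "(\<Sum>p\<in>(SIGMA j:A. A - {j}). hT3 fc B (X i \<omega>) (X (fst p) \<omega>) (X (snd p) \<omega>))
     = (\<Sum>j\<in>A. \<Sum>k\<in>A - {j}. hT3 fc B (X i \<omega>) (X j \<omega>) (X k \<omega>))"
    using fA by (subst sum.Sigma) (auto simp: case_prod_beta)
  also have "\<dots> = 2 * real (triangles_n fc B (\<lambda>k. X k \<omega>) n i)"
    using triangles_sum[OF i, of fc B "\<lambda>k. X k \<omega>"] fc_sym by (simp add: A_def)
  finally have "STs n i \<omega> = 2 * real (triangles_n fc B (\<lambda>k. X k \<omega>) n i) - real (card (SIGMA j:A. A - {j})) * ETh (X i \<omega>)" .
  moreover have rc: "real (card (SIGMA j:A. A - {j})) = (real n - 1) * (real n - 2)"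
  proof (cases "n = 1")
    case True
    then have "card A = 0" using cA by simp
    then show ?thesis using cS True by simp
  next
    case False
    then have "n \<ge> 2" using i by simp
    then show ?thesis using cS cA by (simp add: of_nat_diff)
  qed
  ultimately show ?thesis by simp
qed

end


lemma abs_range_bound: "a \<in> {0..1} \<or> a = w \<Longrightarrow> \<bar>a\<bar> \<le> 1 + \<bar>w::real\<bar>"
  by auto

context clust
begin

lemma main:
  "AE \<omega> in M. (\<lambda>n. global_clust fc B w (\<lambda>i. X i \<omega>) n) \<longlonglongrightarrow> expectation (\<lambda>\<omega>. C_lim F fc B w (X 1 \<omega>))"
proof -
  interpret F: prob_space F by (rule F_prob)
  define L where "L = (\<integral>x. C_lim F fc B w x \<partial>F)"
  have EL: "expectation (\<lambda>\<omega>. C_lim F fc B w (X 1 \<omega>)) = L"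
    unfolding L_def by (subst distrX[of 1, symmetric], subst integral_distr) auto
  define S where "S r = {x. 0 < EDh x \<and> EDh x < 1 / real (Suc r)}" for r
  have Sm[measurable]: "S r \<in> sets borel" for r unfolding S_def by measurable
  define pr where "pr r = measure F (S r)" for r
  have A1: "AE \<omega> in M. (\<lambda>n. (\<Sum>i\<in>{1..n}. C_lim F fc B w (X i \<omega>)) / real n) \<longlonglongrightarrow> L"
    unfolding L_def
  proof (rule slln[of _ "-(1 + \<bar>w\<bar>)" "1 + \<bar>w\<bar>"])
    fix x show "C_lim F fc B w x \<in> {- (1 + \<bar>w\<bar>)..1 + \<bar>w\<bar>}"
      using abs_range_bound[OF Clim_range[of w x]] by (simp add: abs_le_iff)
  qed auto
  have A2: "AE \<omega> in M. \<forall>r. (\<lambda>n. (\<Sum>i\<in>{1..n}. indicator (S r) (X i \<omega>)) / real n) \<longlonglongrightarrow> pr r"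
  proof (simp only: AE_all_countable, intro allI)
    fix r
    have "AE \<omega> in M. (\<lambda>n. (\<Sum>i\<in>{1..n}. indicator (S r) (X i \<omega>)) / real n) \<longlonglongrightarrow> (\<integral>x. indicator (S r) x \<partial>F)"
      by (rule slln[of _ 0 1]) (auto simp: indicator_def)
    moreover have "(\<integral>x. indicator (S r) x \<partial>F) = pr r" by (simp add: pr_def)
    ultimately show "AE \<omega> in M. (\<lambda>n. (\<Sum>i\<in>{1..n}. indicator (S r) (X i \<omega>)) / real n) \<longlonglongrightarrow> pr r" by simp
  qed
  have p0: "pr \<longlonglongrightarrow> 0" unfolding pr_def S_def by (rule small_measure_lim)
  from A1 A2 AE_cnt AE_zero_deg show ?thesis
  proof eventually_elim
    case (elim \<omega>)
    note h1 = elim(1) and h2 = elim(2) and h3 = elim(3) and h4 = elim(4)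
    define x where "x = (\<lambda>i. X i \<omega>)"
    have gc: "global_clust fc B w x n = (\<Sum>i\<in>{1..n}. local_clust fc B w x n i) / real n" for n
      by (simp add: global_clust_def)
    have "(\<lambda>n. (\<Sum>i\<in>{1..n}. local_clust fc B w x n i) / real n) \<longlonglongrightarrow> L"
    proof (rule det_main[where Dn = "\<lambda>n i. degree_n fc B x n i" and Tn = "\<lambda>n i. triangles_n fc B x n i"
          and c = "\<lambda>i. C_lim F fc B w (x i)" and d = "\<lambda>i. EDh (x i)" and t = "\<lambda>i. ETh (x i)" and p = pr
          and K = "2 + 2 * \<bar>w\<bar>"])
      show "0 < 2 + 2 * \<bar>w\<bar>" by simp
    next
      fix n i :: nat
      show "\<bar>local_clust fc B w x n i - C_lim F fc B w (x i)\<bar> \<le> 2 + 2 * \<bar>w\<bar>"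
        using abs_range_bound[OF local_clust_bound[of fc B w x n i]] abs_range_bound[OF Clim_range[of w "x i"]]
        by linarith
    next
      fix n n' i :: nat assume "n \<le> n'"
      then show "degree_n fc B x n i \<le> degree_n fc B x n' i" by (rule degree_mono)
    next
      fix n n' i :: nat assume "n \<le> n'"
      then show "triangles_n fc B x n i \<le> triangles_n fc B x n' i" by (rule triangles_mono)
    next
      show "(\<lambda>n. (\<Sum>i\<in>{1..n}. C_lim F fc B w (x i)) / real n) \<longlonglongrightarrow> L" using h1 by (simp add: x_def)
    next
      fix r
      have "real (card {i\<in>{1..n}. 0 < EDh (x i) \<and> EDh (x i) < 1 / real (Suc r)}) = (\<Sum>i\<in>{1..n}. indicator (S r) (X i \<omega>))" for n
      proof -
        have "real (card {i\<in>{1..n}. 0 < EDh (x i) \<and> EDh (x i) < 1 / real (Suc r)}) =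
              (\<Sum>i\<in>{1..n}. if 0 < EDh (x i) \<and> EDh (x i) < 1 / real (Suc r) then 1 else 0)"
          by (rule sum_count) simp
        also have "\<dots> = (\<Sum>i\<in>{1..n}. indicator (S r) (X i \<omega>))"
          by (intro sum.cong refl) (simp add: S_def x_def indicator_def)
        finally show ?thesis .
      qed
      then show "(\<lambda>n. real (card {i\<in>{1..n}. 0 < EDh (x i) \<and> EDh (x i) < 1 / real (Suc r)}) / real n) \<longlonglongrightarrow> pr r"
        using h2 by simp
    next
      show "pr \<longlonglongrightarrow> 0" by (rule p0)
    next
      fix n i :: nat assume i: "i \<in> {1..n}" and d0: "EDh (x i) = 0"
      have "real (degree_n fc B x n i) = (\<Sum>j\<in>{1..n}-{i}. hh fc B (x i) (x j))" by (rule degree_sum[OF i])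
      also have "\<dots> = 0" using h4 d0 by (intro sum.neutral) (auto simp: x_def)
      finally have "degree_n fc B x n i = 0" by simp
      then show "local_clust fc B w x n i = C_lim F fc B w (x i)"
        using d0 by (simp add: local_clust_deg0 Clim_eq)
    next
      fix i
      show "0 \<le> EDh (x i) \<and> EDh (x i) \<le> 1 \<and> 0 \<le> ETh (x i) \<and> ETh (x i) \<le> (EDh (x i))\<^sup>2"
        using EDh01 ETh01 ETh_le by auto
    next
      fix i assume "0 < EDh (x i)"
      then show "C_lim F fc B w (x i) = ETh (x i) / (EDh (x i))\<^sup>2" by (simp add: Clim_eq)
    next
      fix n i :: nat assume "i \<in> {1..n}" "2 \<le> degree_n fc B x n i"
      then show "local_clust fc B w x n i = 2 * real (triangles_n fc B x n i) /
          (real (degree_n fc B x n i) * (real (degree_n fc B x n i) - 1))"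
        by (intro local_clust_ge2)
    next
      fix r s
      have eq: "{i\<in>{1..m}. badS \<delta> m i \<omega>} = {i\<in>{1..m}. badP (\<lambda>n i. degree_n fc B x n i) (\<lambda>n i. triangles_n fc B x n i)
           (\<lambda>i. EDh (x i)) (\<lambda>i. ETh (x i)) \<delta> m i}" for \<delta> m
        by (auto simp: badS_def badP_def SDs_eq STs_eq x_def)
      show "eventually (\<lambda>k. real (card {i\<in>{1..(Suc k)\<^sup>2}. badP (\<lambda>n i. degree_n fc B x n i) (\<lambda>n i. triangles_n fc B x n i)
           (\<lambda>i. EDh (x i)) (\<lambda>i. ETh (x i)) (1 / real (Suc r)) ((Suc k)\<^sup>2) i})
          < 1 / real (Suc s) * real ((Suc k)\<^sup>2)) sequentially"
        using h3[rule_format, of r s] unfolding cnt_def eq by simp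
    qed
    moreover have gcf: "(\<lambda>n. global_clust fc B w x n) = (\<lambda>n. (\<Sum>i\<in>{1..n}. local_clust fc B w x n i) / real n)"
      by (simp add: global_clust_def fun_eq_iff)
    ultimately have "(\<lambda>n. global_clust fc B w x n) \<longlonglongrightarrow> L" by simp
    then show ?case using EL by (simp add: x_def)
  qed
qed

end

theorem theorem3:
  fixes M :: "'s measure" and X :: "nat \<Rightarrow> 's \<Rightarrow> real" and F :: "real measure"
    and fc :: "real \<Rightarrow> real \<Rightarrow> real" and B :: "real set" and w :: real
  assumes "prob_space M"
    and "\<And>i. X i \<in> borel_measurable M"
    and "prob_space.indep_vars M (\<lambda>_. borel) X UNIV"
    and "\<And>i. distr M borel (X i) = F"
    and "(\<lambda>(x, y). fc x y) \<in> borel_measurable (borel \<Otimes>\<^sub>M borel)"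
    and "\<And>x y. fc x y = fc y x"
    and "B \<in> sets borel"
  shows "AE \<omega> in M. (\<lambda>n. global_clust fc B w (\<lambda>i. X i \<omega>) n)
           \<longlonglongrightarrow> prob_space.expectation M (\<lambda>\<omega>. C_lim F fc B w (X 1 \<omega>))"
proof -
  interpret clust M X F fc B
    using assms by (simp add: clust_def clust_axioms_def)
  show ?thesis by (rule main)
qed


end
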